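(* Let $n\ge1$, $A=\begin{bmatrix}1&2\\0&1\end{bmatrix}$, $B=\begin{bmatrix}1&0\\2&1\end{bmatrix}$, $\tau=\begin{bmatrix}0&-1\\1&-1\end{bmatrix}$, and $\Phi(n)=\langle A^n,B^n,\Gamma(2)'\rangle\subset\mathrm{PSL}_2(\mathbb{Z})$, where $\Gamma(2)'$ is the commutator subgroup of the principal congruence subgroup $\Gamma(2)$. Then the group of modular symbols $M_2(\Phi(n))$ is a free abelian group of rank $n^2+1$, with basis given by the Manin symbols \[[A^iB^j\tau]\ (1\le i\le n-1,\ 0\le j\le n-1),\qquad [A^{n-1}B^j]\ (0\le j\le n-1),\qquad [B^{n-1}\tau].\]
   Context: For a finite index subgroup $G\subset\mathrm{PSL}_2(\mathbb{Z})$, $X_G=\bar{\mathfrak{H}}/G$ with $\bar{\mathfrak{H}}=\mathfrak{H}\cup\mathbb{P}^1(\mathbb{Q})$, and its cusps are the images of $\mathbb{P}^1(\mathbb{Q})$. For $\alpha,\beta\in\mathbb{P}^1(\mathbb{Q})$, the modular symbol $\{\alpha,\beta\}$ is the class in $H_1(X_G(\mathbb{C}),\{\text{cusps}\};\mathbb{Z})$ of the image of a path from $\alpha$ to $\beta$ in $\bar{\mathfrak{H}}$. For $a\in\mathrm{PSL}_2(\mathbb{Z})$, the Manin symbol $[a]$ is $\{a\cdot0,a\cdot i\infty\}$; it depends only on the right coset $Ga$. The group of modular symbols $M_2(G)$ is the group generated by all modular symbols, identified with $H_1(X_G(\mathbb{C}),\{\text{cusps}\};\mathbb{Z})$ (equivalently,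 Manin's presentation: generated by the Manin symbols of right cosets, subject to $[a]+[a\sigma]=0$, $[a]+[a\tau]+[a\tau^2]=0$, with $\sigma=\begin{bmatrix}0&1\\-1&0\end{bmatrix}$). *)

theory Defs
  imports Main "HOL-Library.Function_Algebras"
begin

text \<open>A matrix [a b; c d] is the tuple (a,b,c,d).  PSL_2(Z) is handled through
  SL_2(Z): a subgroup of PSL_2(Z) is represented by its full preimage in SL_2(Z)
  (which contains -I); right cosets correspond bijectively.\<close>

type_synonym mat2 = "int \<times> int \<times> int \<times> int"

fun mmul :: "mat2 \<Rightarrow> mat2 \<Rightarrow> mat2" where
  "mmul (a, b, c, d) (e, f, g, h) = (a*e + b*g, a*f + b*h, c*e + d*g, c*f + d*h)"

fun minv :: "mat2 \<Rightarrow> mat2" where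
  "minv (a, b, c, d) = (d, -b, -c, a)"

definition mone :: mat2 where "mone = (1, 0, 0, 1)"

definition mneg_one :: mat2 where "mneg_one = (-1, 0, 0, -1)"

fun mpow :: "mat2 \<Rightarrow> nat \<Rightarrow> mat2" where
  "mpow m 0 = mone"
| "mpow m (Suc k) = mmul (mpow m k) m"

definition SL2 :: "mat2 set" where
  "SL2 = {(a, b, c, d). a*d - b*c = 1}"

definition matA :: mat2 where "matA = (1, 2, 0, 1)"
definition matB :: mat2 where "matB = (1, 0, 2, 1)"
definition mtau :: mat2 where "mtau = (0, -1, 1, -1)"
definition msigma :: mat2 where "msigma = (0, 1, -1, 0)"

definition Gamma2 :: "mat2 set" where
  "Gamma2 = {(a, b, c, d). a*d - b*c = 1 \<and> a mod 2 = 1 \<and> d mod 2 = 1 \<and> b mod 2 = 0 \<and> c mod 2 = 0}"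

inductive_set gen_subgroup :: "mat2 set \<Rightarrow> mat2 set" for S where
  gen_one: "mone \<in> gen_subgroup S"
| gen_base: "s \<in> S \<Longrightarrow> s \<in> gen_subgroup S"
| gen_mul: "x \<in> gen_subgroup S \<Longrightarrow> y \<in> gen_subgroup S \<Longrightarrow> mmul x y \<in> gen_subgroup S"
| gen_inv: "x \<in> gen_subgroup S \<Longrightarrow> minv x \<in> gen_subgroup S"

definition Gamma2_comm :: "mat2 set" where
  "Gamma2_comm = gen_subgroup {mmul (mmul x y) (mmul (minv x) (minv y)) | x y. x \<in> Gamma2 \<and> y \<in> Gamma2}"

text \<open>Preimage in SL_2(Z) of Phi(n) = < A^n, B^n, Gamma(2)' > in PSL_2(Z).\<close>
definition Phi :: "nat \<Rightarrow> mat2 set" where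
  "Phi n = gen_subgroup ({mpow matA n, mpow matB n, mneg_one} \<union> Gamma2_comm)"

definition rcoset :: "mat2 set \<Rightarrow> mat2 \<Rightarrow> mat2 set" where
  "rcoset G a = {mmul g a | g. g \<in> G}"

definition right_cosets :: "mat2 set \<Rightarrow> mat2 set set" where
  "right_cosets G = {rcoset G a | a. a \<in> SL2}"

definition free_cosets :: "mat2 set \<Rightarrow> (mat2 set \<Rightarrow> int) set" where
  "free_cosets G = {v. \<forall>x. x \<notin> right_cosets G \<longrightarrow> v x = 0}"

definition manin_gen :: "mat2 set \<Rightarrow> mat2 \<Rightarrow> (mat2 set \<Rightarrow> int)" where
  "manin_gen G a = (\<lambda>x. if x = rcoset G a then 1 else 0)"

definition manin_relators :: "mat2 set \<Rightarrow> (mat2 set \<Rightarrow> int) set" where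
  "manin_relators G =
     {manin_gen G a + manin_gen G (mmul a msigma) | a. a \<in> SL2} \<union>
     {manin_gen G a + manin_gen G (mmul a mtau) + manin_gen G (mmul a (mmul mtau mtau)) | a. a \<in> SL2}"

inductive_set zspan :: "('a \<Rightarrow> int) set \<Rightarrow> ('a \<Rightarrow> int) set" for S where
  zspan_zero: "0 \<in> zspan S"
| zspan_add: "w \<in> zspan S \<Longrightarrow> v \<in> S \<Longrightarrow> w + v \<in> zspan S"
| zspan_diff: "w \<in> zspan S \<Longrightarrow> v \<in> S \<Longrightarrow> w - v \<in> zspan S"

text \<open>M_2(G) = free_cosets G / manin_rel G.  Two vectors represent the same modular
  symbol iff their difference lies in manin_rel G.\<close>
definition manin_rel :: "mat2 set \<Rightarrow> (mat2 set \<Rightarrow> int) set" where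
  "manin_rel G = zspan (manin_relators G)"

definition is_manin_basis :: "mat2 set \<Rightarrow> 'i set \<Rightarrow> ('i \<Rightarrow> mat2) \<Rightarrow> bool" where
  "is_manin_basis G I b \<longleftrightarrow> finite I \<and> (\<forall>k\<in>I. b k \<in> SL2) \<and>
     (\<forall>v \<in> free_cosets G. \<exists>!c. (\<forall>k. k \<notin> I \<longrightarrow> c k = 0) \<and>
        v - (\<lambda>x. \<Sum>k\<in>I. c k * manin_gen G (b k) x) \<in> manin_rel G)"

definition basis_index :: "nat \<Rightarrow> (nat \<times> nat \<times> nat) set" where
  "basis_index n = {(0, i, j) | i j. 1 \<le> i \<and> i \<le> n - 1 \<and> j \<le> n - 1}
                 \<union> {(1, 0, j) | j. j \<le> n - 1} \<union> {(2, 0, 0)}"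

fun basis_mat :: "nat \<Rightarrow> nat \<times> nat \<times> nat \<Rightarrow> mat2" where
  "basis_mat n (t, i, j) =
     (if t = 0 then mmul (mmul (mpow matA i) (mpow matB j)) mtau
      else if t = 1 then mmul (mpow matA (n - 1)) (mpow matB j)
      else mmul (mpow matB (n - 1)) mtau)"

end

theory Submission
  imports Defs
begin

lemma mmul_assoc: "mmul (mmul x y) z = mmul x (mmul y z)"
  by (cases x; cases y; cases z) (simp add: algebra_simps)

lemma mone_l[simp]: "mmul mone x = x" by (cases x) (simp add: mone_def)
lemma mone_r[simp]: "mmul x mone = x" by (cases x) (simp add: mone_def)

lemma SL2_iff: "(a,b,c,d) \<in> SL2 \<longleftrightarrow> a*d - b*c = 1" by (simp add: SL2_def)

lemma minv_l: "x \<in> SL2 \<Longrightarrow> mmul (minv x) x = mone"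
  by (cases x) (auto simp: SL2_def mone_def algebra_simps)
lemma minv_r: "x \<in> SL2 \<Longrightarrow> mmul x (minv x) = mone"
  by (cases x) (auto simp: SL2_def mone_def algebra_simps)
lemma SL2_mul: assumes "x \<in> SL2" "y \<in> SL2" shows "mmul x y \<in> SL2"
proof -
  obtain a b c d where x: "x = (a,b,c,d)" by (cases x) auto
  obtain e f g h where y: "y = (e,f,g,h)" by (cases y) auto
  have "(a*e+b*g)*(c*f+d*h) - (a*f+b*h)*(c*e+d*g) = (a*d-b*c)*(e*h-f*g)" by algebra
  then show ?thesis using assms x y by (simp add: SL2_def)
qed
lemma SL2_inv: "x \<in> SL2 \<Longrightarrow> minv x \<in> SL2"
  by (cases x) (auto simp: SL2_def algebra_simps)
lemma minv_minv[simp]: "minv (minv x) = x" by (cases x) simp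
lemma minv_mul: "minv (mmul x y) = mmul (minv y) (minv x)"
  by (cases x; cases y) (simp add: algebra_simps)


definition rA :: "int \<Rightarrow> int \<Rightarrow> int" where "rA p q = (p + \<bar>q\<bar>) mod (2*\<bar>q\<bar>) - \<bar>q\<bar>"
definition kA :: "int \<Rightarrow> int \<Rightarrow> int" where "kA p q = (p - rA p q) div (2*q)"

lemma rA_bounds: "q \<noteq> 0 \<Longrightarrow> -\<bar>q\<bar> \<le> rA p q \<and> rA p q < \<bar>q\<bar>"
  unfolding rA_def by (simp add: pos_mod_bound)

lemma rA_unique:
  assumes "q \<noteq> 0" "\<bar>p - 2*k*q\<bar> < \<bar>q\<bar>"
  shows "rA p q = p - 2*k*q \<and> kA p q = k"
proof -
  define r where "r = p - 2*k*q"
  define s where "s = (if q \<ge> 0 then k else -k)"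
  have s: "2*k*q = s * (2*\<bar>q\<bar>)" by (auto simp: s_def abs_if)
  have eq: "p + \<bar>q\<bar> = (r + \<bar>q\<bar>) + s*(2*\<bar>q\<bar>)" using s by (simp add: r_def)
  have "(p + \<bar>q\<bar>) mod (2*\<bar>q\<bar>) = ((r + \<bar>q\<bar>) + s*(2*\<bar>q\<bar>)) mod (2*\<bar>q\<bar>)"
    by (subst eq) (rule refl)
  also have "\<dots> = (r + \<bar>q\<bar>) mod (2*\<bar>q\<bar>)" by (rule mod_mult_self1)
  also have "\<dots> = r + \<bar>q\<bar>" using assms by (intro mod_pos_pos_trivial) (auto simp: r_def)
  finally have 1: "rA p q = r" by (simp add: rA_def)
  then have "kA p q = (2*k*q) div (2*q)" by (simp add: kA_def r_def)
  also have "\<dots> = k" using assms(1) by simp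
  finally show ?thesis using 1 r_def by simp
qed

lemma rA_lt: "q \<noteq> 0 \<Longrightarrow> \<bar>rA p q\<bar> \<le> \<bar>q\<bar>"
  using rA_bounds[of q p] by auto

function psi :: "mat2 \<Rightarrow> int \<times> int" where
  "psi (p, b, q, d) =
    (if q = 0 then (p*b div 2, 0)
     else if \<bar>p\<bar> > \<bar>q\<bar> then
       (case psi (rA p q, b - 2 * kA p q * d, q, d) of (x, y) \<Rightarrow> (x + kA p q, y))
     else if p \<noteq> 0 \<and> \<bar>q\<bar> > \<bar>p\<bar> then
       (case psi (p, b, rA q p, d - 2 * kA q p * b) of (x, y) \<Rightarrow> (x, y + kA q p))
     else (0, 0))"
  by pat_completeness auto
termination
  apply (relation "measure (\<lambda>(p,b,q,d). nat \<bar>p\<bar> + nat \<bar>q\<bar>)")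
   apply simp
  subgoal for p b q d using rA_lt[of q p] by auto
  subgoal for p b q d using rA_lt[of p q] by auto
  done

declare psi.simps[simp del]


lemma psi0: "psi (p, b, 0, d) = (p*b div 2, 0)" by (simp add: psi.simps)

lemma psiA:
  assumes "q \<noteq> 0" "\<bar>p\<bar> > \<bar>q\<bar>" "\<bar>p - 2*k*q\<bar> < \<bar>q\<bar>"
  shows "psi (p, b, q, d) = (fst (psi (p - 2*k*q, b - 2*k*d, q, d)) + k, snd (psi (p - 2*k*q, b - 2*k*d, q, d)))"
proof -
  from rA_unique[OF assms(1,3)] have e: "rA p q = p - 2*k*q" "kA p q = k" by auto
  have "psi (p, b, q, d) = (case psi (rA p q, b - 2 * kA p q * d, q, d) of (x, y) \<Rightarrow> (x + kA p q, y))"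
    using assms(1,2) by (subst psi.simps) auto
  then show ?thesis unfolding e by (simp split: prod.split)
qed

lemma psiB:
  assumes "p \<noteq> 0" "\<bar>q\<bar> > \<bar>p\<bar>" "\<bar>q - 2*k*p\<bar> < \<bar>p\<bar>"
  shows "psi (p, b, q, d) = (fst (psi (p, b, q - 2*k*p, d - 2*k*b)), snd (psi (p, b, q - 2*k*p, d - 2*k*b)) + k)"
proof -
  from rA_unique[OF assms(1,3)] have e: "rA q p = q - 2*k*p" "kA q p = k" by auto
  have "psi (p, b, q, d) = (case psi (p, b, rA q p, d - 2 * kA q p * b) of (x, y) \<Rightarrow> (x, y + kA q p))"
    using assms(1,2) by (subst psi.simps) auto
  then show ?thesis unfolding e by (simp split: prod.split)
qed

lemma red_exists:
  fixes p q :: int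
  assumes "q \<noteq> 0" "p mod 2 \<noteq> q mod 2"
  shows "\<exists>k. \<bar>p - 2*k*q\<bar> < \<bar>q\<bar>"
proof -
  define m where "m = (p + \<bar>q\<bar>) div (2*\<bar>q\<bar>)"
  define r where "r = (p + \<bar>q\<bar>) mod (2*\<bar>q\<bar>)"
  have e: "p + \<bar>q\<bar> = m * (2*\<bar>q\<bar>) + r" unfolding m_def r_def by (rule div_mult_mod_eq[symmetric])
  have rb: "0 \<le> r" "r < 2*\<bar>q\<bar>" using assms(1) by (auto simp: r_def pos_mod_bound)
  define k where "k = (if q \<ge> 0 then m else -m)"
  have e2: "p - 2*k*q = r - \<bar>q\<bar>"
  proof (cases "q \<ge> 0")
    case True
    then have "\<bar>q\<bar> = q" by simp
    then show ?thesis using e True by (simp add: k_def algebra_simps)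
  next
    case False
    then have "\<bar>q\<bar> = -q" by simp
    then show ?thesis using e False by (simp add: k_def algebra_simps)
  qed
  have "r \<noteq> 0"
  proof
    assume "r = 0"
    then have "p = 2*(k*q) - \<bar>q\<bar>" using e2 by simp
    then obtain t where t: "p = 2*t - \<bar>q\<bar>" by blast
    then have "p mod 2 = q mod 2" using t by presburger
    then show False using assms(2) by simp
  qed
  then have "\<bar>p - 2*k*q\<bar> < \<bar>q\<bar>" using e2 rb by auto
  then show ?thesis by blast
qed

definition Apow :: "int \<Rightarrow> mat2" where "Apow j = (1, 2*j, 0, 1)"
definition Bpow :: "int \<Rightarrow> mat2" where "Bpow j = (1, 0, 2*j, 1)"

lemma Apow_mul: "mmul (Apow j) (p, b, q, d) = (p + 2*j*q, b + 2*j*d, q, d)"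
  by (simp add: Apow_def)
lemma Bpow_mul: "mmul (Bpow j) (p, b, q, d) = (p, b, q + 2*j*p, d + 2*j*b)"
  by (simp add: Bpow_def algebra_simps)

lemma Gamma2_iff: "(p, b, q, d) \<in> Gamma2 \<longleftrightarrow> p*d - b*q = 1 \<and> p mod 2 = 1 \<and> d mod 2 = 1 \<and> b mod 2 = 0 \<and> q mod 2 = 0"
  by (simp add: Gamma2_def)

lemma abs_neq_par: fixes x y :: int shows "x mod 2 \<noteq> y mod 2 \<Longrightarrow> \<bar>x\<bar> \<noteq> \<bar>y\<bar>"
proof
  assume a: "x mod 2 \<noteq> y mod 2" "\<bar>x\<bar> = \<bar>y\<bar>"
  then have "x = y \<or> x = -y" by (simp add: abs_eq_iff)
  then show False using a(1) by presburger
qed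

lemma psi_Apow:
  assumes g: "(p, b, q, d) \<in> Gamma2"
  shows "psi (mmul (Apow j) (p, b, q, d)) = (fst (psi (p, b, q, d)) + j, snd (psi (p, b, q, d)))"
proof -
  have det: "p*d - b*q = 1" and par: "p mod 2 = 1" "q mod 2 = 0" using g by (auto simp: Gamma2_iff)
  have pnz: "p \<noteq> 0" using par by auto
  have nq: "\<bar>p\<bar> \<noteq> \<bar>q\<bar>" using par by (intro abs_neq_par) (simp add: mult.assoc)
  show ?thesis
  proof (cases "q = 0")
    case True
    then have "p*d = 1" using det by simp
    then have "p*(b + 2*j*d) = p*b + j*2" by (simp add: algebra_simps)
    then show ?thesis using True by (simp add: Apow_mul psi0)
  next
    case qnz: False
    show ?thesis
    proof (cases "\<bar>p\<bar> > \<bar>q\<bar>")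
      case True
      obtain k where k: "\<bar>p - 2*k*q\<bar> < \<bar>q\<bar>" using red_exists[OF qnz] par by auto
      have pk: "psi (p, b, q, d) = (fst (psi (p - 2*k*q, b - 2*k*d, q, d)) + k, snd (psi (p - 2*k*q, b - 2*k*d, q, d)))"
        by (rule psiA[OF qnz True k])
      have np: "\<bar>p + 2*j*q\<bar> \<noteq> \<bar>q\<bar>" using par by (intro abs_neq_par) (simp add: mult.assoc)
      show ?thesis
      proof (cases "\<bar>p + 2*j*q\<bar> > \<bar>q\<bar>")
        case True
        have k2: "\<bar>(p + 2*j*q) - 2*(k+j)*q\<bar> < \<bar>q\<bar>" using k by (simp add: algebra_simps)
        have e1: "(p + 2*j*q) - 2*(k+j)*q = p - 2*k*q" and e2: "(b + 2*j*d) - 2*(k+j)*d = b - 2*k*d" by (simp_all add: algebra_simps)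
        have "psi (p + 2*j*q, b + 2*j*d, q, d) = (fst (psi ((p + 2*j*q) - 2*(k+j)*q, (b + 2*j*d) - 2*(k+j)*d, q, d)) + (k+j), snd (psi ((p + 2*j*q) - 2*(k+j)*q, (b + 2*j*d) - 2*(k+j)*d, q, d)))"
          by (rule psiA[OF qnz True k2])
        then have "psi (p + 2*j*q, b + 2*j*d, q, d) = (fst (psi (p - 2*k*q, b - 2*k*d, q, d)) + (k+j), snd (psi (p - 2*k*q, b - 2*k*d, q, d)))"
          unfolding e1 e2 .
        then show ?thesis using pk by (simp add: Apow_mul)
      next
        case False
        then have lt: "\<bar>p - 2*(-j)*q\<bar> < \<bar>q\<bar>" using np by simp
        have "psi (p, b, q, d) = (fst (psi (p - 2*(-j)*q, b - 2*(-j)*d, q, d)) + (-j), snd (psi (p - 2*(-j)*q, b - 2*(-j)*d, q, d)))"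
          by (rule psiA[OF qnz \<open>\<bar>p\<bar> > \<bar>q\<bar>\<close> lt])
        then show ?thesis by (simp add: Apow_mul)
      qed
    next
      case False
      then have qp: "\<bar>q\<bar> > \<bar>p\<bar>" using nq by simp
      show ?thesis
      proof (cases "j = 0")
        case True then show ?thesis by (simp add: Apow_mul)
      next
        case jnz: False
        have j1: "1 \<le> \<bar>j\<bar>" using jnz by linarith
        have "\<bar>2*j*q\<bar> \<ge> 2*\<bar>q\<bar>" using mult_right_mono[OF j1, of "\<bar>q\<bar>"] by (simp add: abs_mult)
        then have gt: "\<bar>p + 2*j*q\<bar> > \<bar>q\<bar>" using qp by linarith
        have lt: "\<bar>(p + 2*j*q) - 2*j*q\<bar> < \<bar>q\<bar>" using qp by simp
        have "psi (p + 2*j*q, b + 2*j*d, q, d) = (fst (psi ((p + 2*j*q) - 2*j*q, (b + 2*j*d) - 2*j*d, q, d)) + j, snd (psi ((p + 2*j*q) - 2*j*q, (b + 2*j*d) - 2*j*d, q, d)))"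
          by (rule psiA[OF qnz gt lt])
        then show ?thesis by (simp add: Apow_mul)
      qed
    qed
  qed
qed


lemma psi_Bpow:
  assumes g: "(p, b, q, d) \<in> Gamma2"
  shows "psi (mmul (Bpow j) (p, b, q, d)) = (fst (psi (p, b, q, d)), snd (psi (p, b, q, d)) + j)"
proof -
  have det: "p*d - b*q = 1" and par: "p mod 2 = 1" "q mod 2 = 0" using g by (auto simp: Gamma2_iff)
  have pnz: "p \<noteq> 0" using par by auto
  have nq: "\<bar>p\<bar> \<noteq> \<bar>q\<bar>" using par by (intro abs_neq_par) (simp add: mult.assoc)
  show ?thesis
  proof (cases "\<bar>q\<bar> > \<bar>p\<bar>")
    case True
    obtain k where k: "\<bar>q - 2*k*p\<bar> < \<bar>p\<bar>" using red_exists[OF pnz, of q] par by auto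
    have pk: "psi (p, b, q, d) = (fst (psi (p, b, q - 2*k*p, d - 2*k*b)), snd (psi (p, b, q - 2*k*p, d - 2*k*b)) + k)"
      by (rule psiB[OF pnz True k])
    have np: "\<bar>q + 2*j*p\<bar> \<noteq> \<bar>p\<bar>" using par by (intro abs_neq_par) (simp add: mult.assoc)
    show ?thesis
    proof (cases "\<bar>q + 2*j*p\<bar> > \<bar>p\<bar>")
      case True
      have k2: "\<bar>(q + 2*j*p) - 2*(k+j)*p\<bar> < \<bar>p\<bar>" using k by (simp add: algebra_simps)
      have e1: "(q + 2*j*p) - 2*(k+j)*p = q - 2*k*p" and e2: "(d + 2*j*b) - 2*(k+j)*b = d - 2*k*b" by (simp_all add: algebra_simps)
      have "psi (p, b, q + 2*j*p, d + 2*j*b) = (fst (psi (p, b, (q + 2*j*p) - 2*(k+j)*p, (d + 2*j*b) - 2*(k+j)*b)), snd (psi (p, b, (q + 2*j*p) - 2*(k+j)*p, (d + 2*j*b) - 2*(k+j)*b)) + (k+j))"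
        by (rule psiB[OF pnz True k2])
      then have "psi (p, b, q + 2*j*p, d + 2*j*b) = (fst (psi (p, b, q - 2*k*p, d - 2*k*b)), snd (psi (p, b, q - 2*k*p, d - 2*k*b)) + (k+j))"
        unfolding e1 e2 .
      then show ?thesis using pk by (simp add: Bpow_mul)
    next
      case False
      then have lt: "\<bar>q - 2*(-j)*p\<bar> < \<bar>p\<bar>" using np by simp
      have "psi (p, b, q, d) = (fst (psi (p, b, q - 2*(-j)*p, d - 2*(-j)*b)), snd (psi (p, b, q - 2*(-j)*p, d - 2*(-j)*b)) + (-j))"
        by (rule psiB[OF pnz \<open>\<bar>q\<bar> > \<bar>p\<bar>\<close> lt])
      then show ?thesis by (simp add: Bpow_mul)
    qed
  next
    case False
    then have qp: "\<bar>p\<bar> > \<bar>q\<bar>" using nq by simp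
    show ?thesis
    proof (cases "j = 0")
      case True then show ?thesis by (simp add: Bpow_mul)
    next
      case jnz: False
      have j1: "1 \<le> \<bar>j\<bar>" using jnz by linarith
        have "\<bar>2*j*p\<bar> \<ge> 2*\<bar>p\<bar>" using mult_right_mono[OF j1, of "\<bar>p\<bar>"] by (simp add: abs_mult)
      then have gt: "\<bar>q + 2*j*p\<bar> > \<bar>p\<bar>" using qp by linarith
      have lt: "\<bar>(q + 2*j*p) - 2*j*p\<bar> < \<bar>p\<bar>" using qp by simp
      have "psi (p, b, q + 2*j*p, d + 2*j*b) = (fst (psi (p, b, (q + 2*j*p) - 2*j*p, (d + 2*j*b) - 2*j*b)), snd (psi (p, b, (q + 2*j*p) - 2*j*p, (d + 2*j*b) - 2*j*b)) + j)"
        by (rule psiB[OF pnz gt lt])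
      then show ?thesis by (simp add: Bpow_mul)
    qed
  qed
qed


definition neg :: "mat2 \<Rightarrow> mat2" where "neg x = mmul mneg_one x"
lemma neg_simp[simp]: "neg (p, b, q, d) = (-p, -b, -q, -d)" by (simp add: neg_def mneg_one_def)

fun m2 :: "mat2 \<Rightarrow> mat2" where "m2 (p, b, q, d) = (p mod 2, b mod 2, q mod 2, d mod 2)"

lemma par2: fixes x y z w :: int shows "(x*y+z*w) mod 2 = ((x mod 2)*(y mod 2) + (z mod 2)*(w mod 2)) mod 2"
proof -
  have "((x mod 2)*(y mod 2) + (z mod 2)*(w mod 2)) mod 2 = (((x mod 2)*(y mod 2)) mod 2 + ((z mod 2)*(w mod 2)) mod 2) mod 2"
    by (rule mod_add_eq[symmetric])
  also have "\<dots> = ((x*y) mod 2 + (z*w) mod 2) mod 2" by (simp only: mod_mult_eq)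
  also have "\<dots> = (x*y+z*w) mod 2" by (rule mod_add_eq)
  finally show ?thesis by simp
qed

lemma m2_mul: "m2 (mmul x y) = m2 (mmul (m2 x) (m2 y))"
  apply (cases x; cases y)
  apply (simp only: mmul.simps m2.simps prod.inject)
  apply (intro conjI; rule par2)
  done

lemma Gamma2_m2: "x \<in> Gamma2 \<longleftrightarrow> x \<in> SL2 \<and> m2 x = (1, 0, 0, 1)"
  by (cases x) (auto simp: Gamma2_iff SL2_iff)

lemma Gamma2_SL2: "x \<in> Gamma2 \<Longrightarrow> x \<in> SL2"
  by (simp add: Gamma2_m2)

lemma Gamma2_mul: assumes "x \<in> Gamma2" "y \<in> Gamma2" shows "mmul x y \<in> Gamma2"
  using assms m2_mul[of x y] by (simp add: Gamma2_m2 SL2_mul)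

lemma Gamma2_inv_aux: assumes "(p, b, q, d) \<in> Gamma2" shows "minv (p,b,q,d) \<in> Gamma2"
proof -
  have "b mod 2 = 0" "q mod 2 = 0" using assms by (simp_all add: Gamma2_iff)
  then have "(-b) mod 2 = 0" "(-q) mod 2 = 0" by presburger+
  then show ?thesis using assms by (simp add: Gamma2_iff mult.commute)
qed

lemma Gamma2_inv: "x \<in> Gamma2 \<Longrightarrow> minv x \<in> Gamma2"
  by (cases x) (simp only: Gamma2_inv_aux)

lemma Apow_G2[simp]: "Apow j \<in> Gamma2" by (simp add: Apow_def Gamma2_iff)
lemma Bpow_G2[simp]: "Bpow j \<in> Gamma2" by (simp add: Bpow_def Gamma2_iff)
lemma mone_G2[simp]: "mone \<in> Gamma2" by (simp add: mone_def Gamma2_iff)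
lemma mneg_G2[simp]: "mneg_one \<in> Gamma2" by (simp add: mneg_one_def Gamma2_iff)

lemma G2_redA: "(p, b, q, d) \<in> Gamma2 \<Longrightarrow> (p - 2*k*q, b - 2*k*d, q, d) \<in> Gamma2"
  using Gamma2_mul[OF Apow_G2[of "-k"], of "(p,b,q,d)"] by (simp add: Apow_mul)
lemma G2_redB: "(p, b, q, d) \<in> Gamma2 \<Longrightarrow> (p, b, q - 2*k*p, d - 2*k*b) \<in> Gamma2"
  using Gamma2_mul[OF Bpow_G2[of "-k"], of "(p,b,q,d)"] by (simp add: Bpow_mul)

lemma G2_induct0:
  assumes base: "\<And>p b d. (p, b, 0, d) \<in> Gamma2 \<Longrightarrow> P (p, b, 0, d)"
    and stepA: "\<And>p b q d k. (p, b, q, d) \<in> Gamma2 \<Longrightarrow> q \<noteq> 0 \<Longrightarrow> \<bar>p\<bar> > \<bar>q\<bar> \<Longrightarrow> \<bar>p - 2*k*q\<bar> < \<bar>q\<bar>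
       \<Longrightarrow> P (p - 2*k*q, b - 2*k*d, q, d) \<Longrightarrow> P (p, b, q, d)"
    and stepB: "\<And>p b q d k. (p, b, q, d) \<in> Gamma2 \<Longrightarrow> p \<noteq> 0 \<Longrightarrow> \<bar>q\<bar> > \<bar>p\<bar> \<Longrightarrow> \<bar>q - 2*k*p\<bar> < \<bar>p\<bar>
       \<Longrightarrow> P (p, b, q - 2*k*p, d - 2*k*b) \<Longrightarrow> P (p, b, q, d)"
  shows "g \<in> Gamma2 \<Longrightarrow> P g"
proof (induction "(\<lambda>(p::int,b::int,q::int,d::int). nat \<bar>p\<bar> + nat \<bar>q\<bar>) g" arbitrary: g rule: less_induct)
  case less
  obtain p b q d where g: "g = (p, b, q, d)" by (cases g) auto
  have G: "(p, b, q, d) \<in> Gamma2" using less g by simp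
  have par: "p mod 2 = 1" "q mod 2 = 0" using G by (auto simp: Gamma2_iff)
  have pnz: "p \<noteq> 0" using par by auto
  have nq: "\<bar>p\<bar> \<noteq> \<bar>q\<bar>" using par by (intro abs_neq_par) simp
  show ?case
  proof (cases "q = 0")
    case True then show ?thesis using base G g by simp
  next
    case qnz: False
    show ?thesis
    proof (cases "\<bar>p\<bar> > \<bar>q\<bar>")
      case True
      obtain k where k: "\<bar>p - 2*k*q\<bar> < \<bar>q\<bar>" using red_exists[OF qnz] par by auto
      have "P (p - 2*k*q, b - 2*k*d, q, d)"
        using less(1)[of "(p - 2*k*q, b - 2*k*d, q, d)"] G2_redA[OF G] k True g by simp
      then show ?thesis using stepA[OF G qnz True k] g by simp
    next
      case False
      then have qp: "\<bar>q\<bar> > \<bar>p\<bar>" using nq by simp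
      obtain k where k: "\<bar>q - 2*k*p\<bar> < \<bar>p\<bar>" using red_exists[OF pnz, of q] par by auto
      have "P (p, b, q - 2*k*p, d - 2*k*b)"
        using less(1)[of "(p, b, q - 2*k*p, d - 2*k*b)"] G2_redB[OF G] k qp g by simp
      then show ?thesis using stepB[OF G pnz qp k] g by simp
    qed
  qed
qed

lemma G2_induct[consumes 1, case_names base stepA stepB]:
  assumes "g \<in> Gamma2"
    and "\<And>p b d. (p, b, 0, d) \<in> Gamma2 \<Longrightarrow> P (p, b, 0, d)"
    and "\<And>p b q d k. (p, b, q, d) \<in> Gamma2 \<Longrightarrow> q \<noteq> 0 \<Longrightarrow> \<bar>p\<bar> > \<bar>q\<bar> \<Longrightarrow> \<bar>p - 2*k*q\<bar> < \<bar>q\<bar>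
       \<Longrightarrow> P (p - 2*k*q, b - 2*k*d, q, d) \<Longrightarrow> P (p, b, q, d)"
    and "\<And>p b q d k. (p, b, q, d) \<in> Gamma2 \<Longrightarrow> p \<noteq> 0 \<Longrightarrow> \<bar>q\<bar> > \<bar>p\<bar> \<Longrightarrow> \<bar>q - 2*k*p\<bar> < \<bar>p\<bar>
       \<Longrightarrow> P (p, b, q - 2*k*p, d - 2*k*b) \<Longrightarrow> P (p, b, q, d)"
  shows "P g"
  using G2_induct0[of P g] assms by blast

lemma psi_neg: "g \<in> Gamma2 \<Longrightarrow> psi (neg g) = psi g"
proof (induction g rule: G2_induct)
  case (base p b d) then show ?case by (simp add: psi0)
next
  case (stepA p b q d k)
  have "psi (-p, -b, -q, -d) = (fst (psi (-p - 2*k*(-q), -b - 2*k*(-d), -q, -d)) + k, snd (psi (-p - 2*k*(-q), -b - 2*k*(-d), -q, -d)))"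
    using stepA by (intro psiA) (auto simp: algebra_simps)
  moreover have "(-p - 2*k*(-q), -b - 2*k*(-d), -q, -d) = neg (p - 2*k*q, b - 2*k*d, q, d)" by simp
  ultimately show ?case using stepA psiA[OF stepA(2,3,4), of b d] by simp
next
  case (stepB p b q d k)
  have "psi (-p, -b, -q, -d) = (fst (psi (-p, -b, -q - 2*k*(-p), -d - 2*k*(-b))), snd (psi (-p, -b, -q - 2*k*(-p), -d - 2*k*(-b))) + k)"
    using stepB by (intro psiB) (auto simp: algebra_simps)
  moreover have "(-p, -b, -q - 2*k*(-p), -d - 2*k*(-b)) = neg (p, b, q - 2*k*p, d - 2*k*b)" by simp
  ultimately show ?case using stepB psiB[OF stepB(2,3,4), of b d] by simp
qed

lemma psi_Apow': "h \<in> Gamma2 \<Longrightarrow> psi (mmul (Apow j) h) = (fst (psi h) + j, snd (psi h))"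
  by (cases h) (simp only: psi_Apow)
lemma psi_Bpow': "h \<in> Gamma2 \<Longrightarrow> psi (mmul (Bpow j) h) = (fst (psi h), snd (psi h) + j)"
  by (cases h) (simp only: psi_Bpow)

lemma redA_mul: "mmul (p, b, q, d) h = mmul (Apow k) (mmul (p - 2*k*q, b - 2*k*d, q, d) h)"
  by (cases h) (simp add: Apow_def algebra_simps)
lemma redB_mul: "mmul (p, b, q, d) h = mmul (Bpow k) (mmul (p, b, q - 2*k*p, d - 2*k*b) h)"
  by (cases h) (simp add: Bpow_def algebra_simps)

lemma G2_base_cases:
  assumes "(p, b, 0, d) \<in> Gamma2"
  shows "((p, b, 0, d) = Apow (b div 2) \<and> p * b div 2 = b div 2) \<or>
         ((p, b, 0, d) = neg (Apow ((-b) div 2)) \<and> p * b div 2 = (-b) div 2)"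
proof -
  have "p*d = 1" "b mod 2 = 0" using assms by (auto simp: Gamma2_iff)
  then have "(p = 1 \<and> d = 1) \<or> (p = -1 \<and> d = -1)" by (simp add: zmult_eq_1_iff)
  moreover have "b = 2 * (b div 2)" "-b = 2 * ((-b) div 2)" using \<open>b mod 2 = 0\<close> by presburger+
  ultimately show ?thesis by (auto simp: Apow_def)
qed

lemma psi_mone[simp]: "psi mone = (0, 0)" by (simp add: mone_def psi0)
lemma psi_Apow_val[simp]: "psi (Apow j) = (j, 0)" by (simp add: Apow_def psi0)
lemma psi_Bpow_val[simp]: "psi (Bpow j) = (0, j)"
  using psi_Bpow'[OF mone_G2, of j] by simp

lemma psi_hom: "g \<in> Gamma2 \<Longrightarrow> h \<in> Gamma2 \<Longrightarrow> psi (mmul g h) = (fst (psi g) + fst (psi h), snd (psi g) + snd (psi h))"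
proof (induction g arbitrary: h rule: G2_induct)
  case (base p b d)
  from G2_base_cases[OF base(1)] show ?case
  proof
    assume a: "(p, b, 0, d) = Apow (b div 2) \<and> p * b div 2 = b div 2"
    then show ?thesis using base psi_Apow'[OF base(2), of "b div 2"] by (simp add: psi0)
  next
    assume a: "(p, b, 0, d) = neg (Apow ((-b) div 2)) \<and> p * b div 2 = (-b) div 2"
    have "mmul (p, b, 0, d) h = neg (mmul (Apow ((-b) div 2)) h)" using a by (simp add: neg_def mmul_assoc)
    moreover have "mmul (Apow ((-b) div 2)) h \<in> Gamma2" using base(2) by (simp add: Gamma2_mul)
    ultimately show ?thesis using a psi_neg psi_Apow'[OF base(2), of "(-b) div 2"] by (simp add: psi0)
  qed
next
  case (stepA p b q d k)
  have G: "mmul (p - 2*k*q, b - 2*k*d, q, d) h \<in> Gamma2" using stepA G2_redA Gamma2_mul by blast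
  show ?case
    using psiA[OF stepA(2,3,4), of b d] stepA(5)[OF stepA(6)] psi_Apow'[OF G, of k] redA_mul[of p b q d h k]
    by simp
next
  case (stepB p b q d k)
  have G: "mmul (p, b, q - 2*k*p, d - 2*k*b) h \<in> Gamma2" using stepB G2_redB Gamma2_mul by blast
  show ?case
    using psiB[OF stepB(2,3,4), of b d] stepB(5)[OF stepB(6)] psi_Bpow'[OF G, of k] redB_mul[of p b q d h k]
    by simp
qed


lemma psi_minv: "g \<in> Gamma2 \<Longrightarrow> psi (minv g) = (- fst (psi g), - snd (psi g))"
  using psi_hom[of g "minv g"] Gamma2_inv[of g] minv_r[OF Gamma2_SL2[of g]] by (simp add: prod_eq_iff; linarith)


definition conjm :: "mat2 \<Rightarrow> mat2 \<Rightarrow> mat2" where "conjm h x = mmul (mmul h x) (minv h)"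
definition comms :: "mat2 set" where
  "comms = {mmul (mmul x y) (mmul (minv x) (minv y)) | x y. x \<in> Gamma2 \<and> y \<in> Gamma2}"
definition Qgrp :: "mat2 set" where "Qgrp = gen_subgroup ({mneg_one} \<union> comms)"

lemma conjm_mul: "h \<in> SL2 \<Longrightarrow> conjm h (mmul x y) = mmul (conjm h x) (conjm h y)"
  by (simp add: conjm_def mmul_assoc minv_l[of h, symmetric] del: mmul.simps)
    (simp add: mmul_assoc[symmetric] minv_l)

lemma conjm_inv: "conjm h (minv x) = minv (conjm h x)"
  by (simp add: conjm_def minv_mul mmul_assoc)

lemma conjm_G2: "h \<in> Gamma2 \<Longrightarrow> x \<in> Gamma2 \<Longrightarrow> conjm h x \<in> Gamma2"
  by (simp add: conjm_def Gamma2_mul Gamma2_inv)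

lemma conjm_mneg: "h \<in> SL2 \<Longrightarrow> conjm h mneg_one = mneg_one"
  by (cases h) (auto simp: conjm_def mneg_one_def SL2_iff algebra_simps)

lemma conjm_mone: "h \<in> SL2 \<Longrightarrow> conjm h mone = mone"
  by (simp add: conjm_def minv_r)

lemma comms_conj: assumes "h \<in> Gamma2" "c \<in> comms" shows "conjm h c \<in> comms"
proof -
  obtain x y where c: "c = mmul (mmul x y) (mmul (minv x) (minv y))" "x \<in> Gamma2" "y \<in> Gamma2"
    using assms(2) by (auto simp: comms_def)
  have hS: "h \<in> SL2" using assms(1) Gamma2_SL2 by blast
  have "conjm h c = mmul (mmul (conjm h x) (conjm h y)) (mmul (minv (conjm h x)) (minv (conjm h y)))"
    using c(1) by (simp add: conjm_mul[OF hS] conjm_inv)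
  then show ?thesis using c conjm_G2[OF assms(1)] unfolding comms_def by blast
qed

lemma Qgrp_normal: assumes "h \<in> Gamma2" "c \<in> Qgrp" shows "conjm h c \<in> Qgrp"
proof -
  have hS: "h \<in> SL2" using assms(1) Gamma2_SL2 by blast
  have "c \<in> gen_subgroup ({mneg_one} \<union> comms)" using assms(2) by (simp add: Qgrp_def)
  then show ?thesis unfolding Qgrp_def
  proof induction
    case gen_one then show ?case by (simp add: conjm_mone[OF hS] gen_subgroup.gen_one)
  next
    case (gen_base s)
    then show ?case
    proof
      assume "s \<in> {mneg_one}" then show ?thesis by (simp add: conjm_mneg[OF hS] gen_subgroup.gen_base)
    next
      assume "s \<in> comms" then show ?thesis using comms_conj[OF assms(1)] by (simp add: gen_subgroup.gen_base)
    qed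
  next
    case (gen_mul x y) then show ?case by (simp add: conjm_mul[OF hS] gen_subgroup.gen_mul)
  next
    case (gen_inv x) then show ?case by (simp add: conjm_inv gen_subgroup.gen_inv)
  qed
qed

lemma gen_subgroup_SL2: assumes "S \<subseteq> SL2" "x \<in> gen_subgroup S" shows "x \<in> SL2"
  using assms(2) by induction (use assms(1) in \<open>auto simp: SL2_mul SL2_inv mone_def SL2_iff\<close>)

lemma gen_subgroup_G2: assumes "S \<subseteq> Gamma2" "x \<in> gen_subgroup S" shows "x \<in> Gamma2"
  using assms(2) by induction (use assms(1) in \<open>auto simp: Gamma2_mul Gamma2_inv\<close>)

lemma comms_G2: "comms \<subseteq> Gamma2"
  unfolding comms_def by (blast intro: Gamma2_mul Gamma2_inv)

lemma Gamma2_comm_G2: "Gamma2_comm \<subseteq> Gamma2"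
  unfolding Gamma2_comm_def using gen_subgroup_G2[OF comms_G2[unfolded comms_def]] by blast

lemma mpowA: "mpow matA k = Apow (int k)"
  by (induction k) (simp_all add: mone_def Apow_def matA_def algebra_simps)
lemma mpowB: "mpow matB k = Bpow (int k)"
  by (induction k) (simp_all add: mone_def Bpow_def matB_def algebra_simps)

lemma psi_comm1: "x \<in> Gamma2 \<Longrightarrow> y \<in> Gamma2 \<Longrightarrow> psi (mmul (mmul x y) (mmul (minv x) (minv y))) = (0, 0)"
  by (simp add: psi_hom Gamma2_mul Gamma2_inv psi_minv)

lemma psi_comms: "c \<in> comms \<Longrightarrow> psi c = (0, 0)"
  unfolding comms_def using psi_comm1 by blast

lemma psi_Gamma2_comm: assumes "c \<in> Gamma2_comm" shows "psi c = (0, 0)"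
proof -
  have "c \<in> gen_subgroup comms" using assms by (simp add: Gamma2_comm_def comms_def)
  then show ?thesis
  proof induction
    case gen_one then show ?case by simp
  next
    case (gen_base s) then show ?case by (rule psi_comms)
  next
    case (gen_mul x y)
    have "x \<in> Gamma2" "y \<in> Gamma2" using gen_mul(1,2) gen_subgroup_G2[OF comms_G2] by auto
    then show ?case using gen_mul by (simp add: psi_hom)
  next
    case (gen_inv x)
    have "x \<in> Gamma2" using gen_inv(1) gen_subgroup_G2[OF comms_G2] by auto
    then show ?case using gen_inv by (simp add: psi_minv)
  qed
qed

lemma Phi_gens_G2: "{mpow matA n, mpow matB n, mneg_one} \<union> Gamma2_comm \<subseteq> Gamma2"
  using Gamma2_comm_G2 by (auto simp: mpowA mpowB)

lemma Phi_G2: "g \<in> Phi n \<Longrightarrow> g \<in> Gamma2"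
  unfolding Phi_def using gen_subgroup_G2[OF Phi_gens_G2] by blast

lemma Phi_psi: assumes "g \<in> Phi n" shows "int n dvd fst (psi g) \<and> int n dvd snd (psi g)"
proof -
  have "g \<in> gen_subgroup ({mpow matA n, mpow matB n, mneg_one} \<union> Gamma2_comm)" using assms by (simp add: Phi_def)
  then show ?thesis
  proof induction
    case gen_one then show ?case by simp
  next
    case (gen_base s) then show ?case
      by (auto simp: mpowA mpowB psi_Gamma2_comm mneg_one_def psi0)
  next
    case (gen_mul x y)
    have "x \<in> Gamma2" "y \<in> Gamma2" using gen_mul(1,2) gen_subgroup_G2[OF Phi_gens_G2] by auto
    then show ?case using gen_mul by (simp add: psi_hom)
  next
    case (gen_inv x)
    have "x \<in> Gamma2" using gen_inv(1) gen_subgroup_G2[OF Phi_gens_G2] by auto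
    then show ?case using gen_inv by (simp add: psi_minv)
  qed
qed

lemma Qgrp_Phi: assumes "c \<in> Qgrp" shows "c \<in> Phi n"
proof -
  have "c \<in> gen_subgroup ({mneg_one} \<union> comms)" using assms by (simp add: Qgrp_def)
  then show ?thesis unfolding Phi_def
  proof induction
    case gen_one then show ?case by (rule gen_subgroup.gen_one)
  next
    case (gen_base s)
    have "comms \<subseteq> Gamma2_comm" unfolding Gamma2_comm_def comms_def by (blast intro: gen_subgroup.gen_base)
    then show ?case using gen_base by (auto intro: gen_subgroup.gen_base)
  next
    case (gen_mul x y) then show ?case by (blast intro: gen_subgroup.gen_mul)
  next
    case (gen_inv x) then show ?case by (blast intro: gen_subgroup.gen_inv)
  qed
qed

definition Wm :: "int \<Rightarrow> int \<Rightarrow> mat2" where "Wm u v = mmul (Apow u) (Bpow v)"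

lemma idA: "mmul (p, b, q, d) (minv (Wm (u + k) v)) = conjm (Apow k) (mmul (p - 2*k*q, b - 2*k*d, q, d) (minv (Wm u v)))"
  by (simp add: Wm_def conjm_def Apow_def Bpow_def algebra_simps)

lemma idB: "mmul (p, b, q, d) (minv (Wm u (v + k))) =
   mmul (conjm (Bpow k) (mmul (p, b, q - 2*k*p, d - 2*k*b) (minv (Wm u v))))
        (mmul (mmul (Bpow k) (Apow u)) (mmul (minv (Bpow k)) (minv (Apow u))))"
  by (simp add: Wm_def conjm_def Apow_def Bpow_def algebra_simps)

lemma Q_main: "g \<in> Gamma2 \<Longrightarrow> mmul g (minv (Wm (fst (psi g)) (snd (psi g)))) \<in> Qgrp"
proof (induction g rule: G2_induct)
  case (base p b d)
  from G2_base_cases[OF base(1)] show ?case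
  proof
    assume a: "(p, b, 0, d) = Apow (b div 2) \<and> p * b div 2 = b div 2"
    have "mmul (Apow (b div 2)) (minv (Wm (b div 2) 0)) = mone" by (simp add: Wm_def Apow_def Bpow_def mone_def)
    then show ?thesis using a by (simp add: psi0 Qgrp_def gen_subgroup.gen_one del: mmul.simps)
  next
    assume a: "(p, b, 0, d) = neg (Apow ((-b) div 2)) \<and> p * b div 2 = (-b) div 2"
    have "mmul (neg (Apow ((-b) div 2))) (minv (Wm ((-b) div 2) 0)) = mneg_one"
      by (simp add: Wm_def Apow_def Bpow_def mneg_one_def)
    then show ?thesis using a by (simp add: psi0 Qgrp_def gen_subgroup.gen_base psi_neg[OF Apow_G2] del: mmul.simps neg_simp)
  qed
next
  case (stepA p b q d k)
  show ?case
    using idA[of p b q d "fst (psi (p - 2*k*q, b - 2*k*d, q, d))" k "snd (psi (p - 2*k*q, b - 2*k*d, q, d))"]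
      Qgrp_normal[OF Apow_G2 stepA(5), of k] psiA[OF stepA(2,3,4), of b d]
    by (simp add: add.commute del: mmul.simps)
next
  case (stepB p b q d k)
  have c: "mmul (mmul (Bpow k) (Apow u)) (mmul (minv (Bpow k)) (minv (Apow u))) \<in> Qgrp" for u
    unfolding Qgrp_def comms_def by (rule gen_subgroup.gen_base) (blast intro: Apow_G2 Bpow_G2)
  show ?case
    using idB[of p b q d "fst (psi (p, b, q - 2*k*p, d - 2*k*b))" "snd (psi (p, b, q - 2*k*p, d - 2*k*b))" k]
      Qgrp_normal[OF Bpow_G2 stepB(5), of k] psiB[OF stepB(2,3,4), of b d] c[of "fst (psi (p, b, q - 2*k*p, d - 2*k*b))"]
    by (simp add: Qgrp_def gen_subgroup.gen_mul del: mmul.simps)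
qed

lemma Apow_add: "mmul (Apow a) (Apow b) = Apow (a + b)" by (simp add: Apow_def algebra_simps)
lemma Bpow_add: "mmul (Bpow a) (Bpow b) = Bpow (a + b)" by (simp add: Bpow_def algebra_simps)
lemma Apow_minv: "minv (Apow a) = Apow (-a)" by (simp add: Apow_def)
lemma Bpow_minv: "minv (Bpow a) = Bpow (-a)" by (simp add: Bpow_def)
lemma Apow0: "Apow 0 = mone" by (simp add: Apow_def mone_def)
lemma Bpow0: "Bpow 0 = mone" by (simp add: Bpow_def mone_def)

lemma Phi_mul: "x \<in> Phi n \<Longrightarrow> y \<in> Phi n \<Longrightarrow> mmul x y \<in> Phi n"
  unfolding Phi_def by (rule gen_subgroup.gen_mul)
lemma Phi_inv: "x \<in> Phi n \<Longrightarrow> minv x \<in> Phi n"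
  unfolding Phi_def by (rule gen_subgroup.gen_inv)

lemma Apow_Phi_nat: "Apow (int n * int t) \<in> Phi n"
proof (induction t)
  case 0 then show ?case by (simp add: Apow0 Phi_def gen_subgroup.gen_one)
next
  case (Suc t)
  have "Apow (int n) \<in> Phi n" unfolding Phi_def mpowA[symmetric] by (rule gen_subgroup.gen_base) simp
  then have "mmul (Apow (int n * int t)) (Apow (int n)) \<in> Phi n" by (rule Phi_mul[OF Suc])
  then show ?case by (simp add: Apow_add algebra_simps del: mmul.simps)
qed

lemma Bpow_Phi_nat: "Bpow (int n * int t) \<in> Phi n"
proof (induction t)
  case 0 then show ?case by (simp add: Bpow0 Phi_def gen_subgroup.gen_one)
next
  case (Suc t)
  have "Bpow (int n) \<in> Phi n" unfolding Phi_def mpowB[symmetric] by (rule gen_subgroup.gen_base) simp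
  then have "mmul (Bpow (int n * int t)) (Bpow (int n)) \<in> Phi n" by (rule Phi_mul[OF Suc])
  then show ?case by (simp add: Bpow_add algebra_simps del: mmul.simps)
qed

lemma Apow_Phi: "Apow (int n * t) \<in> Phi n"
proof (cases "t \<ge> 0")
  case True
  then have "t = int (nat t)" by simp
  then obtain t' where "t = int t'" by blast
  then show ?thesis using Apow_Phi_nat by simp
next
  case False
  then have "t = - int (nat (-t))" by simp
  then obtain t' where t: "t = - int t'" by blast
  have "minv (Apow (int n * int t')) \<in> Phi n" using Apow_Phi_nat unfolding Phi_def by (rule gen_subgroup.gen_inv)
  then show ?thesis by (simp add: Apow_minv t del: minv.simps)
qed

lemma Bpow_Phi: "Bpow (int n * t) \<in> Phi n"
proof (cases "t \<ge> 0")
  case True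
  then have "t = int (nat t)" by simp
  then obtain t' where "t = int t'" by blast
  then show ?thesis using Bpow_Phi_nat by simp
next
  case False
  then have "t = - int (nat (-t))" by simp
  then obtain t' where t: "t = - int t'" by blast
  have "minv (Bpow (int n * int t')) \<in> Phi n" using Bpow_Phi_nat unfolding Phi_def by (rule gen_subgroup.gen_inv)
  then show ?thesis by (simp add: Bpow_minv t del: minv.simps)
qed


lemma Phi_char: "g \<in> Phi n \<longleftrightarrow> g \<in> Gamma2 \<and> int n dvd fst (psi g) \<and> int n dvd snd (psi g)"
proof
  assume "g \<in> Phi n" then show "g \<in> Gamma2 \<and> int n dvd fst (psi g) \<and> int n dvd snd (psi g)"
    using Phi_G2 Phi_psi by blast
next
  assume a: "g \<in> Gamma2 \<and> int n dvd fst (psi g) \<and> int n dvd snd (psi g)"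
  then obtain s t where st: "fst (psi g) = int n * s" "snd (psi g) = int n * t" by (auto elim!: dvdE)
  define c where "c = mmul g (minv (Wm (fst (psi g)) (snd (psi g))))"
  have c: "c \<in> Phi n" using Q_main[of g] a Qgrp_Phi unfolding c_def by blast
  have W: "Wm (fst (psi g)) (snd (psi g)) \<in> Phi n" unfolding Wm_def st by (intro Phi_mul Apow_Phi Bpow_Phi)
  have WS: "Wm (fst (psi g)) (snd (psi g)) \<in> SL2" unfolding Wm_def by (intro SL2_mul Gamma2_SL2 Apow_G2 Bpow_G2)
  have "mmul c (Wm (fst (psi g)) (snd (psi g))) = g" unfolding c_def mmul_assoc minv_l[OF WS] by simp
  then show "g \<in> Phi n" using Phi_mul[OF c W] by simp
qed


fun rep :: "nat \<Rightarrow> mat2" where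
  "rep c = (if c = 1 then msigma else if c = 2 then mtau else if c = 3 then mmul mtau mtau
            else if c = 4 then (1, 1, 0, 1) else if c = 5 then (1, 0, 1, 1) else mone)"

fun clsP :: "mat2 \<Rightarrow> nat" where
  "clsP (p, b, q, d) = (if q = 0 then (if b = 0 then 0 else 4) else if p = 0 then (if d = 0 then 1 else 2)
     else (if d = 0 then 3 else 5))"

declare rep.simps[simp del]

definition cls :: "mat2 \<Rightarrow> nat" where "cls m = clsP (m2 m)"

lemma m2_m2[simp]: "m2 (m2 m) = m2 m" by (cases m) simp

lemma m2_SL2: assumes "m \<in> SL2"
  shows "m2 m \<in> {(1,0,0,1),(0,1,1,0),(0,1,1,1),(1,1,1,0),(1,1,0,1),(1,0,1,1)}"
proof -
  obtain p b q d where m: "m = (p,b,q,d)" by (cases m) auto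
  have det: "p*d - b*q = 1" using assms m by (simp add: SL2_iff)
  have "(p*d - b*q) mod 2 = ((p mod 2)*(d mod 2) - (b mod 2)*(q mod 2)) mod 2"
  proof -
    have "(p*d - b*q) mod 2 = ((p*d) mod 2 - (b*q) mod 2) mod 2" by (rule mod_diff_eq[symmetric])
    also have "\<dots> = (((p mod 2)*(d mod 2)) mod 2 - ((b mod 2)*(q mod 2)) mod 2) mod 2" by (simp only: mod_mult_eq)
    also have "\<dots> = ((p mod 2)*(d mod 2) - (b mod 2)*(q mod 2)) mod 2" by (rule mod_diff_eq)
    finally show ?thesis .
  qed
  then have e: "((p mod 2)*(d mod 2) - (b mod 2)*(q mod 2)) mod 2 = 1" using det by simp
  have "p mod 2 = 0 \<or> p mod 2 = 1" "b mod 2 = 0 \<or> b mod 2 = 1" "q mod 2 = 0 \<or> q mod 2 = 1" "d mod 2 = 0 \<or> d mod 2 = 1"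
    by presburger+
  then show ?thesis using e m by (elim disjE) simp_all
qed

lemma cls_m2: "cls (m2 m) = cls m" by (simp add: cls_def)

lemma rep_SL2: "rep c \<in> SL2"
  by (simp add: rep.simps msigma_def mtau_def mone_def SL2_iff)

lemma cls_rep: "c < 6 \<Longrightarrow> cls (rep c) = c"
  by (simp add: rep.simps cls_def msigma_def mtau_def mone_def; presburger)

lemma cls_G2mul: assumes "g \<in> Gamma2" shows "cls (mmul g m) = cls m"
proof -
  have "m2 g = mone" using assms by (simp add: Gamma2_m2 mone_def)
  then have "m2 (mmul g m) = m2 m" using m2_mul[of g m] by simp
  then show ?thesis by (simp add: cls_def)
qed

definition keyg :: "mat2 \<Rightarrow> mat2" where "keyg m = mmul m (minv (rep (cls m)))"

lemma keyg_G2: assumes "m \<in> SL2" shows "keyg m \<in> Gamma2"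
proof -
  have S: "keyg m \<in> SL2" unfolding keyg_def by (intro SL2_mul SL2_inv assms rep_SL2)
  have "m2 (keyg m) = m2 (mmul (m2 m) (m2 (minv (rep (clsP (m2 m))))))"
    unfolding keyg_def cls_def by (rule m2_mul)
  also have "\<dots> = (1, 0, 0, 1)" using m2_SL2[OF assms]
    by (elim insertE emptyE) (simp_all add: rep.simps msigma_def mtau_def mone_def)
  finally show ?thesis using S by (simp add: Gamma2_m2)
qed

definition key :: "nat \<Rightarrow> mat2 \<Rightarrow> nat \<times> int \<times> int" where
  "key n m = (cls m, fst (psi (keyg m)) mod int n, snd (psi (keyg m)) mod int n)"

lemma key_mul_Phi: assumes "g \<in> Phi n" "m \<in> SL2" shows "key n (mmul g m) = key n m"
proof -
  have G: "g \<in> Gamma2" using assms(1) Phi_G2 by blast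
  have c: "cls (mmul g m) = cls m" by (rule cls_G2mul[OF G])
  have k: "keyg (mmul g m) = mmul g (keyg m)" unfolding keyg_def c by (simp only: mmul_assoc)
  have p: "psi (keyg (mmul g m)) = (fst (psi g) + fst (psi (keyg m)), snd (psi g) + snd (psi (keyg m)))"
    unfolding k by (rule psi_hom[OF G keyg_G2[OF assms(2)]])
  obtain s t where st: "fst (psi g) = int n * s" "snd (psi g) = int n * t" using Phi_psi[OF assms(1)] by (auto elim!: dvdE)
  show ?thesis unfolding key_def using c p st by simp
qed

lemma key_eq_Phi: assumes "m \<in> SL2" "m' \<in> SL2" "key n m = key n m'" shows "mmul m' (minv m) \<in> Phi n"
proof -
  have c: "cls m = cls m'" using assms(3) by (simp add: key_def)
  have r: "rep (cls m) \<in> SL2" by (rule rep_SL2)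
  have e: "mmul (keyg m') (minv (keyg m)) = mmul m' (minv m)"
  proof -
    define r where "r = rep (cls m')"
    have "mmul (keyg m') (minv (keyg m)) = mmul (mmul m' (minv r)) (mmul r (minv m))"
      unfolding keyg_def c r_def minv_mul minv_minv ..
    also have "\<dots> = mmul m' (mmul (mmul (minv r) r) (minv m))" by (simp only: mmul_assoc)
    also have "\<dots> = mmul m' (minv m)" unfolding r_def minv_l[OF rep_SL2] by simp
    finally show ?thesis .
  qed
  have G: "keyg m' \<in> Gamma2" "minv (keyg m) \<in> Gamma2" using keyg_G2 assms Gamma2_inv by auto
  have ps: "psi (mmul (keyg m') (minv (keyg m))) = (fst (psi (keyg m')) - fst (psi (keyg m)), snd (psi (keyg m')) - snd (psi (keyg m)))"
    using psi_hom[OF G] psi_minv[OF keyg_G2[OF assms(1)]] by simp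
  have m1: "fst (psi (keyg m')) mod int n = fst (psi (keyg m)) mod int n"
    and m2: "snd (psi (keyg m')) mod int n = snd (psi (keyg m)) mod int n" using assms(3) by (simp_all add: key_def)
  have "int n dvd fst (psi (keyg m')) - fst (psi (keyg m))" "int n dvd snd (psi (keyg m')) - snd (psi (keyg m))"
    using m1 m2 by (simp_all add: mod_eq_dvd_iff)
  moreover have "mmul (keyg m') (minv (keyg m)) \<in> Gamma2" using G Gamma2_mul by blast
  ultimately show ?thesis using ps e Phi_char by simp
qed

lemma rcoset_mul: assumes "g \<in> Phi n" shows "rcoset (Phi n) (mmul g m) = rcoset (Phi n) m"
proof -
  have gS: "g \<in> SL2" using assms Phi_G2 Gamma2_SL2 by blast
  have "rcoset (Phi n) (mmul g m) \<subseteq> rcoset (Phi n) m"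
  proof
    fix x assume "x \<in> rcoset (Phi n) (mmul g m)"
    then have "x \<in> {mmul h (mmul g m) | h. h \<in> Phi n}" by (simp add: rcoset_def)
    then obtain h where h: "h \<in> Phi n" "x = mmul h (mmul g m)" by blast
    then have "x = mmul (mmul h g) m" by (simp only: mmul_assoc)
    moreover have "mmul h g \<in> Phi n" using h(1) assms Phi_mul by blast
    ultimately show "x \<in> rcoset (Phi n) m" unfolding rcoset_def by blast
  qed
  moreover have "rcoset (Phi n) m \<subseteq> rcoset (Phi n) (mmul g m)"
  proof
    fix x assume "x \<in> rcoset (Phi n) m"
    then have "x \<in> {mmul g m | g. g \<in> Phi n}" by (simp add: rcoset_def)
    then obtain h where h: "h \<in> Phi n" "x = mmul h m" by blast
    have "mmul (minv g) (mmul g m) = m" by (simp only: mmul_assoc[symmetric] minv_l[OF gS] mone_l)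
    then have "x = mmul (mmul h (minv g)) (mmul g m)"
      using h(2) by (simp only: mmul_assoc)
    moreover have "mmul h (minv g) \<in> Phi n" using h(1) assms Phi_mul Phi_inv by blast
    ultimately show "x \<in> rcoset (Phi n) (mmul g m)" unfolding rcoset_def by blast
  qed
  ultimately show ?thesis by blast
qed

lemma mone_Phi: "mone \<in> Phi n" unfolding Phi_def by (rule gen_subgroup.gen_one)

lemma rcoset_key: assumes "m \<in> SL2" "m' \<in> SL2"
  shows "rcoset (Phi n) m = rcoset (Phi n) m' \<longleftrightarrow> key n m = key n m'"
proof
  assume a: "rcoset (Phi n) m = rcoset (Phi n) m'"
  have "m' = mmul mone m'" by simp
  then have "m' \<in> rcoset (Phi n) m'" unfolding rcoset_def using mone_Phi[of n] by blast
  then have "m' \<in> {mmul g m | g. g \<in> Phi n}" using a by (simp add: rcoset_def)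
  then obtain g where "g \<in> Phi n" "m' = mmul g m" by blast
  then show "key n m = key n m'" using key_mul_Phi assms by simp
next
  assume "key n m = key n m'"
  then have g: "mmul m' (minv m) \<in> Phi n" by (rule key_eq_Phi[OF assms])
  have "mmul (mmul m' (minv m)) m = m'" using minv_l[OF assms(1)] by (simp add: mmul_assoc del: mmul.simps)
  then show "rcoset (Phi n) m = rcoset (Phi n) m'" using rcoset_mul[OF g, of m] by simp
qed

definition mk :: "nat \<Rightarrow> nat \<times> int \<times> int \<Rightarrow> mat2" where
  "mk n k = (case k of (c, u, v) \<Rightarrow> mmul (Wm (u mod int n) (v mod int n)) (rep c))"

definition normK :: "nat \<Rightarrow> nat \<times> int \<times> int \<Rightarrow> nat \<times> int \<times> int" where
  "normK n k = (case k of (c, u, v) \<Rightarrow> (c, u mod int n, v mod int n))"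

lemma Wm_G2: "Wm u v \<in> Gamma2" by (simp add: Wm_def Gamma2_mul)
lemma psi_Wm: "psi (Wm u v) = (u, v)" by (simp add: Wm_def psi_hom)

lemma mk_SL2: "mk n k \<in> SL2"
  by (cases k) (simp add: mk_def SL2_mul Gamma2_SL2[OF Wm_G2] rep_SL2)

lemma keyg_mul: assumes "g \<in> Gamma2" "m \<in> SL2" shows "keyg (mmul g m) = mmul g (keyg m)"
  unfolding keyg_def cls_G2mul[OF assms(1)] by (simp only: mmul_assoc)

lemma key_mk: assumes "fst k < 6" shows "key n (mk n k) = normK n k"
proof -
  obtain c u v where k: "k = (c, u, v)" by (cases k) auto
  have c: "c < 6" using assms k by simp
  have cl: "cls (mk n k) = c" using k cls_G2mul[OF Wm_G2] cls_rep[OF c] by (simp add: mk_def)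
  have "keyg (mk n k) = mmul (mmul (Wm (u mod int n) (v mod int n)) (rep c)) (minv (rep c))"
    unfolding keyg_def cl by (simp add: mk_def k)
  also have "\<dots> = Wm (u mod int n) (v mod int n)" by (simp only: mmul_assoc minv_r[OF rep_SL2] mone_r)
  finally show ?thesis using cl by (simp add: key_def psi_Wm normK_def k)
qed

lemma m_decomp: assumes "m \<in> SL2" shows "m = mmul (keyg m) (rep (cls m))"
  unfolding keyg_def by (simp only: mmul_assoc minv_l[OF rep_SL2] mone_r)

lemma key_mul_right: assumes "m \<in> SL2" "x \<in> SL2"
  shows "key n (mmul m x) = (cls (mmul (rep (cls m)) x),
     (fst (psi (keyg m)) + fst (psi (keyg (mmul (rep (cls m)) x)))) mod int n,
     (snd (psi (keyg m)) + snd (psi (keyg (mmul (rep (cls m)) x)))) mod int n)"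
proof -
  define r where "r = rep (cls m)"
  have G: "keyg m \<in> Gamma2" by (rule keyg_G2[OF assms(1)])
  have rx: "mmul r x \<in> SL2" unfolding r_def by (intro SL2_mul rep_SL2 assms(2))
  have e: "mmul m x = mmul (keyg m) (mmul r x)"
    using m_decomp[OF assms(1)] unfolding r_def by (metis mmul_assoc)
  have c: "cls (mmul m x) = cls (mmul r x)" unfolding e by (rule cls_G2mul[OF G])
  have kg: "keyg (mmul m x) = mmul (keyg m) (keyg (mmul r x))" unfolding e by (rule keyg_mul[OF G rx])
  show ?thesis unfolding key_def c kg r_def[symmetric] using psi_hom[OF G keyg_G2[OF rx]] by simp
qed

definition sc :: "nat \<Rightarrow> nat" where
  "sc c = (if c = 0 then 1 else if c = 1 then 0 else if c = 2 then 5 else if c = 5 then 2 else if c = 3 then 4 else 3)"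

definition tauK :: "nat \<times> int \<times> int \<Rightarrow> nat \<times> int \<times> int" where
  "tauK k = (case k of (c, u, v) \<Rightarrow>
     (if c = 0 then (2, u, v) else if c = 2 then (3, u, v) else if c = 3 then (0, u, v)
      else if c = 1 then (4, u - 1, v) else if c = 4 then (5, u + 1, v - 1) else (1, u, v + 1)))"

definition sigK :: "nat \<times> int \<times> int \<Rightarrow> nat \<times> int \<times> int" where
  "sigK k = (case k of (c, u, v) \<Rightarrow> (sc c, u, v))"

lemma lt6: "c < (6::nat) \<Longrightarrow> c = 0 \<or> c = 1 \<or> c = 2 \<or> c = 3 \<or> c = 4 \<or> c = 5" by auto

lemma tab_sigma: "c < 6 \<Longrightarrow> cls (mmul (rep c) msigma) = sc c \<and> psi (keyg (mmul (rep c) msigma)) = (0, 0)"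
  by (drule lt6) (auto simp: sc_def keyg_def cls_def rep.simps msigma_def mtau_def mone_def psi.simps rA_def kA_def)

lemma tab_tau: "c < 6 \<Longrightarrow> cls (mmul (rep c) mtau) = fst (tauK (c, 0, 0)) \<and> psi (keyg (mmul (rep c) mtau)) = snd (tauK (c, 0, 0))"
  by (drule lt6) (auto simp: tauK_def keyg_def cls_def rep.simps msigma_def mtau_def mone_def psi.simps rA_def kA_def)

lemma cls_lt6: "cls m < 6"
  by (cases "m2 m") (simp add: cls_def)

lemma tauK_shift: "tauK (c, u, v) = (fst (tauK (c, 0, 0)), u + fst (snd (tauK (c, 0, 0))), v + snd (snd (tauK (c, 0, 0))))"
  by (simp add: tauK_def)

lemma key_sigma: assumes "m \<in> SL2" shows "key n (mmul m msigma) = normK n (sigK (key n m))"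
proof -
  have sS: "msigma \<in> SL2" by (simp add: msigma_def SL2_iff)
  show ?thesis using key_mul_right[OF assms sS, of n] tab_sigma[OF cls_lt6[of m]]
    by (simp add: key_def sigK_def normK_def)
qed

lemma key_tau: assumes "m \<in> SL2" shows "key n (mmul m mtau) = normK n (tauK (key n m))"
proof -
  have tS: "mtau \<in> SL2" by (simp add: mtau_def SL2_iff)
  show ?thesis using key_mul_right[OF assms tS, of n] tab_tau[OF cls_lt6[of m]]
    by (simp add: key_def normK_def tauK_shift[of "cls m" "fst (psi (keyg m)) mod int n" "snd (psi (keyg m)) mod int n"] mod_add_left_eq)
qed


type_synonym idx = "nat \<times> nat \<times> nat"

definition ev :: "idx \<Rightarrow> idx \<Rightarrow> int" where "ev j i = (if i = j then 1 else 0)"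

definition Fb0 :: "nat \<Rightarrow> int \<Rightarrow> int \<Rightarrow> idx \<Rightarrow> int" where
  "Fb0 n u v i = (if u \<ge> 1 then ev (0, nat u, nat v) i
     else ev (2, 0, 0) i + (\<Sum>w\<in>{1..<n}. ev (0, w, n - 1) i - ev (0, w, nat v) i))"

definition Fb :: "nat \<Rightarrow> int \<Rightarrow> int \<Rightarrow> idx \<Rightarrow> int" where
  "Fb n u v i = Fb0 n (u mod int n) (v mod int n) i"

definition Dd :: "nat \<Rightarrow> int \<Rightarrow> int \<Rightarrow> idx \<Rightarrow> int" where
  "Dd n u v i = Fb n (u - 1) v i - Fb n u (v - 1) i"

definition Fa :: "nat \<Rightarrow> int \<Rightarrow> int \<Rightarrow> idx \<Rightarrow> int" where
  "Fa n u v i = ev (1, 0, nat (v mod int n)) i - (\<Sum>w\<in>{Suc (nat (u mod int n))..<n}. Dd n (int w) v i)"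

lemma Dd_mod: "n \<ge> 1 \<Longrightarrow> Dd n (u mod int n) v i = Dd n u v i"
  by (simp add: Dd_def Fb_def mod_diff_left_eq)

lemma rowsum: assumes "n \<ge> 1"
  shows "(\<Sum>w<n. Fb n (int w) v i) = ev (2, 0, 0) i + (\<Sum>w\<in>{1..<n}. ev (0, w, n - 1) i)"
proof -
  have "(\<Sum>w<n. Fb n (int w) v i) = Fb n 0 v i + (\<Sum>w\<in>{1..<n}. Fb n (int w) v i)"
    using assms by (simp add: lessThan_atLeast0 sum.atLeast_Suc_lessThan)
  also have "(\<Sum>w\<in>{1..<n}. Fb n (int w) v i) = (\<Sum>w\<in>{1..<n}. ev (0, w, nat (v mod int n)) i)"
    by (rule sum.cong) (auto simp: Fb_def Fb0_def)
  also have "Fb n 0 v i = ev (2, 0, 0) i + (\<Sum>w\<in>{1..<n}. ev (0, w, n - 1) i - ev (0, w, nat (v mod int n)) i)"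
    by (simp add: Fb_def Fb0_def)
  finally show ?thesis by (simp add: sum_subtractf)
qed

lemma Fb_shift_sum: assumes "n \<ge> 1" shows "(\<Sum>w<n. Fb n (int w - 1) v i) = (\<Sum>w<n. Fb n (int w) v i)"
proof -
  obtain m where m: "n = Suc m" using assms by (cases n) auto
  have "(\<Sum>w<Suc m. Fb n (int w - 1) v i) = Fb n (-1) v i + (\<Sum>w<m. Fb n (int w) v i)"
    by (subst sum.lessThan_Suc_shift) simp
  also have "Fb n (-1) v i = Fb n (int m) v i"
  proof -
    have "(-1) mod int n = int m mod int n" using m by (simp add: zmod_minus1)
    then show ?thesis by (simp add: Fb_def)
  qed
  finally show ?thesis using m by simp
qed

lemma Dd_sum0: assumes "n \<ge> 1" shows "(\<Sum>w<n. Dd n (int w) v i) = 0"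
  using Fb_shift_sum[OF assms, of v i] rowsum[OF assms, of v i] rowsum[OF assms, of "v - 1" i]
  by (simp add: Dd_def sum_subtractf)

lemma Fa_key: assumes "n \<ge> 1" shows "Fa n u v i - Fa n (u - 1) v i = Dd n u v i"
proof -
  define u' where "u' = nat (u mod int n)"
  have u'l: "u' < n" using assms by (simp add: u'_def nat_less_iff)
  have uu: "int u' = u mod int n" using assms by (simp add: u'_def)
  have m1: "(u - 1) mod int n = (int u' - 1) mod int n" unfolding uu by (rule mod_diff_left_eq[symmetric])
  show ?thesis
  proof (cases "u' \<ge> 1")
    case True
    have "(int u' - 1) mod int n = int u' - 1" using True u'l by (intro mod_pos_pos_trivial) auto
    then have "nat ((u - 1) mod int n) = u' - 1" using m1 by simp
    then have s: "Suc (nat ((u - 1) mod int n)) = u'" using True by simp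
    have "(\<Sum>w\<in>{u'..<n}. Dd n (int w) v i) = Dd n (int u') v i + (\<Sum>w\<in>{Suc u'..<n}. Dd n (int w) v i)"
      using u'l by (rule sum.atLeast_Suc_lessThan)
    then show ?thesis using Dd_mod[OF assms, of u v i] unfolding Fa_def s u'_def[symmetric] uu by simp
  next
    case False
    then have u0: "u' = 0" by simp
    have "(int u' - 1) mod int n = int n - 1" using u0 assms by (simp add: zmod_minus1)
    then have "nat ((u - 1) mod int n) = n - 1" using m1 by simp
    then have s: "Suc (nat ((u - 1) mod int n)) = n" using assms by simp
    have "(\<Sum>w<n. Dd n (int w) v i) = Dd n 0 v i + (\<Sum>w\<in>{1..<n}. Dd n (int w) v i)"
      using assms by (simp add: lessThan_atLeast0 sum.atLeast_Suc_lessThan)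
    then have "(\<Sum>w\<in>{1..<n}. Dd n (int w) v i) = - Dd n 0 v i" using Dd_sum0[OF assms, of v i] by simp
    moreover have "Dd n 0 v i = Dd n u v i" using Dd_mod[OF assms, of u v i] uu u0 by simp
    ultimately show ?thesis unfolding Fa_def s u'_def[symmetric] using u0 by simp
  qed
qed


definition FF :: "nat \<Rightarrow> nat \<times> int \<times> int \<Rightarrow> idx \<Rightarrow> int" where
  "FF n k i = (case k of (c, u, v) \<Rightarrow>
     (if c = 0 then Fa n u v i else if c = 1 then - Fa n u v i else if c = 2 then Fb n u v i
      else if c = 3 then - Fa n u v i - Fb n u v i else if c = 4 then Fa n u v i + Fb n u v i
      else - Fb n u v i))"

lemma FF_sig: assumes "fst k < 6" shows "FF n k i + FF n (sigK k) i = 0"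
proof -
  obtain c u v where k: "k = (c, u, v)" by (cases k) auto
  show ?thesis using lt6[of c] assms k by (auto simp: FF_def sigK_def sc_def)
qed

lemma FF_tau: assumes "n \<ge> 1" "fst k < 6" shows "FF n k i + FF n (tauK k) i + FF n (tauK (tauK k)) i = 0"
proof -
  obtain c u v where k: "k = (c, u, v)" by (cases k) auto
  have c: "c = 0 \<or> c = 1 \<or> c = 2 \<or> c = 3 \<or> c = 4 \<or> c = 5" using lt6[of c] assms k by simp
  have K1: "Fa n u v i - Fa n (u - 1) v i = Fb n (u - 1) v i - Fb n u (v - 1) i"
    using Fa_key[OF assms(1)] by (simp add: Dd_def)
  have K4: "Fa n (u + 1) v i - Fa n u v i = Fb n u v i - Fb n (u + 1) (v - 1) i"
    using Fa_key[OF assms(1), of "u + 1" v i] by (simp add: Dd_def)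
  have K5: "Fa n u (v + 1) i - Fa n (u - 1) (v + 1) i = Fb n (u - 1) (v + 1) i - Fb n u v i"
    using Fa_key[OF assms(1), of u "v + 1" i] by (simp add: Dd_def)
  show ?thesis using c k K1 K4 K5 by (auto simp: FF_def tauK_def)
qed

lemma Fb_mod: "Fb n (u mod int n) (v mod int n) i = Fb n u v i"
  by (simp add: Fb_def)

lemma Fb_mod2: "Fb n u (v mod int n) i = Fb n u v i"
  by (simp add: Fb_def)

lemma Fb_mod3: "Fb n u (v mod int n - 1) i = Fb n u (v - 1) i"
  by (simp add: Fb_def mod_diff_left_eq)

lemma Dd_modv: "Dd n w (v mod int n) i = Dd n w v i"
  by (simp add: Dd_def Fb_mod2 Fb_mod3)

lemma Fa_mod: "Fa n (u mod int n) (v mod int n) i = Fa n u v i"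
  by (simp add: Fa_def Dd_modv)

lemma FF_norm: "FF n (normK n k) i = FF n k i"
  by (cases k) (simp add: FF_def normK_def Fa_mod Fb_mod)

definition bkey :: "nat \<Rightarrow> idx \<Rightarrow> nat \<times> int \<times> int" where
  "bkey n t = (case t of (s, i, j) \<Rightarrow> if s = 0 then (2, int i, int j) else if s = 1 then (0, int n - 1, int j)
     else (2, 0, int n - 1))"

lemma FF_basis: assumes "n \<ge> 1" "t \<in> basis_index n" shows "FF n (bkey n t) i = ev t i"
proof -
  from assms(2) consider (a) i' j where "t = (0, i', j)" "1 \<le> i'" "i' \<le> n - 1" "j \<le> n - 1"
    | (b) j where "t = (1, 0, j)" "j \<le> n - 1" | (c) "t = (2, 0, 0)"
    unfolding basis_index_def by blast
  then show ?thesis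
  proof cases
    case a
    have "int i' mod int n = int i'" "int j mod int n = int j" using a assms(1) by auto
    then show ?thesis using a by (simp add: bkey_def FF_def Fb_def Fb0_def)
  next
    case b
    have "(int n - 1) mod int n = int n - 1" using assms(1) by (intro mod_pos_pos_trivial) auto
    moreover have "int j mod int n = int j" using b assms(1) by auto
    ultimately
    show ?thesis using b assms(1) by (simp add: bkey_def FF_def Fa_def)
  next
    case c
    have "(int n - 1) mod int n = int n - 1" using assms(1) by (intro mod_pos_pos_trivial) auto
    moreover have "nat (int n - 1) = n - 1" using assms(1) by simp
    ultimately show ?thesis using c assms(1) by (simp add: bkey_def FF_def Fb_def Fb0_def)
  qed
qed


lemma sum_fun_apply: "(\<Sum>i\<in>A. f i) x = (\<Sum>i\<in>A. f i x)"
  by (induction A rule: infinite_finite_induct) auto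

definition smul :: "int \<Rightarrow> ('a \<Rightarrow> int) \<Rightarrow> 'a \<Rightarrow> int" where "smul c f = (\<lambda>x. c * f x)"

lemma zspan_base: "v \<in> S \<Longrightarrow> v \<in> zspan S"
  using zspan.zspan_add[OF zspan.zspan_zero, of v S] by simp

lemma zspan_addc: assumes "w \<in> zspan S" "w' \<in> zspan S" shows "w + w' \<in> zspan S"
  using assms(2)
proof induction
  case zspan_zero then show ?case using assms(1) by (simp only: add_0_right)
next
  case (zspan_add u v)
  have e: "w + (u + v) = (w + u) + v" by (simp only: add.assoc)
  show ?case unfolding e by (rule zspan.zspan_add[OF zspan_add(3) zspan_add(2)])
next
  case (zspan_diff u v)
  have e: "w + (u - v) = (w + u) - v" by (simp only: add_diff_eq)
  show ?case unfolding e by (rule zspan.zspan_diff[OF zspan_diff(3) zspan_diff(2)])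
qed

lemma zspan_uminus: assumes "w \<in> zspan S" shows "- w \<in> zspan S"
  using assms
proof induction
  case zspan_zero then show ?case by (simp only: minus_zero zspan.zspan_zero)
next
  case (zspan_add u v)
  have e: "- (u + v) = (- u) - v" by (rule ext) simp
  show ?case unfolding e by (rule zspan.zspan_diff[OF zspan_add(3) zspan_add(2)])
next
  case (zspan_diff u v)
  have e: "- (u - v) = (- u) + v" by (rule ext) simp
  show ?case unfolding e by (rule zspan.zspan_add[OF zspan_diff(3) zspan_diff(2)])
qed

lemma zspan_diffc: "w \<in> zspan S \<Longrightarrow> w' \<in> zspan S \<Longrightarrow> w - w' \<in> zspan S"
  using zspan_addc[of w S "- w'"] zspan_uminus[of w' S] by (simp only: diff_conv_add_uminus)

lemma zspan_smult_nat: assumes "w \<in> zspan S" shows "smul (int k) w \<in> zspan S"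
proof (induction k)
  have e: "smul (int 0) w = 0" by (simp add: smul_def fun_eq_iff)
  case 0 then show ?case unfolding e by (rule zspan.zspan_zero)
next
  case (Suc k)
  have "smul (int (Suc k)) w = smul (int k) w + w" by (simp add: smul_def fun_eq_iff algebra_simps)
  then show ?case using zspan_addc[OF Suc assms] by (simp only:)
qed

lemma zspan_smult: assumes "w \<in> zspan S" shows "smul c w \<in> zspan S"
proof (cases "c \<ge> 0")
  case True
  then have "c = int (nat c)" by simp
  then show ?thesis using zspan_smult_nat[OF assms, of "nat c"] by (simp only:)
next
  case False
  then have "smul c w = - smul (int (nat (-c))) w" by (simp add: smul_def fun_eq_iff)
  then show ?thesis using zspan_uminus[OF zspan_smult_nat[OF assms, of "nat (-c)"]] by (simp only:)
qed

lemma zspan_sum: assumes "\<And>a. a \<in> A \<Longrightarrow> f a \<in> zspan S" shows "(\<Sum>a\<in>A. f a) \<in> zspan S"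
  using assms
proof (induction A rule: infinite_finite_induct)
  case (infinite A)
  then have "sum f A = 0" by simp
  then show ?case by (simp only: zspan.zspan_zero)
next
  case empty then show ?case by (simp only: sum.empty zspan.zspan_zero)
next
  case (insert a A)
  have "sum f A \<in> zspan S" using insert by blast
  moreover have "f a \<in> zspan S" using insert by blast
  ultimately have "f a + sum f A \<in> zspan S" by (intro zspan_addc)
  moreover have "sum f (insert a A) = f a + sum f A" using insert(1,2) by (rule sum.insert)
  ultimately show ?case by (simp only:)
qed

definition gk :: "nat \<Rightarrow> nat \<times> int \<times> int \<Rightarrow> mat2 set \<Rightarrow> int" where
  "gk n k = manin_gen (Phi n) (mk n k)"

lemma normK_key: "normK n (key n m) = key n m" by (simp add: normK_def key_def)
lemma mk_norm: "mk n (normK n k) = mk n k" by (cases k) (simp add: mk_def normK_def)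
lemma gk_norm: "gk n (normK n k) = gk n k" by (simp add: gk_def mk_norm)

lemma manin_gen_cong: "rcoset G a = rcoset G b \<Longrightarrow> manin_gen G a = manin_gen G b"
  by (simp add: manin_gen_def)

lemma manin_gen_key: assumes "a \<in> SL2" shows "manin_gen (Phi n) a = gk n (key n a)"
proof -
  have "fst (key n a) < 6" by (simp add: key_def cls_lt6)
  then have "key n (mk n (key n a)) = key n a" using key_mk[of "key n a" n] normK_key[of n a] by simp
  then have "rcoset (Phi n) a = rcoset (Phi n) (mk n (key n a))"
    using rcoset_key[OF assms mk_SL2] by simp
  then show ?thesis unfolding gk_def by (rule manin_gen_cong)
qed

lemma normK_sigK: "normK n (sigK (normK n k)) = normK n (sigK k)"
  by (cases k) (simp add: normK_def sigK_def)
lemma normK_tauK: "normK n (tauK (normK n k)) = normK n (tauK k)"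
  by (cases k) (simp add: normK_def tauK_def mod_add_left_eq mod_diff_left_eq)
lemma normK_tauK2: "normK n (tauK (tauK (normK n k))) = normK n (tauK (tauK k))"
  by (cases k) (simp add: normK_def tauK_def mod_add_left_eq mod_diff_left_eq)

lemma fst_sigK: "fst k < 6 \<Longrightarrow> fst (sigK k) < 6" by (cases k) (simp add: sigK_def sc_def)
lemma fst_tauK: "fst (tauK k) < 6" by (cases k) (simp add: tauK_def)

lemma R1: assumes "fst k < 6" shows "gk n k + gk n (sigK k) \<in> manin_rel (Phi n)"
proof -
  define a where "a = mk n k"
  have aS: "a \<in> SL2" unfolding a_def by (rule mk_SL2)
  have ka: "key n a = normK n k" unfolding a_def by (rule key_mk[OF assms])
  have "manin_gen (Phi n) (mmul a msigma) = gk n (key n (mmul a msigma))"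
    by (rule manin_gen_key) (simp add: aS SL2_mul msigma_def SL2_iff)
  also have "\<dots> = gk n (sigK k)" unfolding key_sigma[OF aS] ka normK_sigK gk_norm ..
  finally have e: "manin_gen (Phi n) (mmul a msigma) = gk n (sigK k)" .
  have "manin_gen (Phi n) a + manin_gen (Phi n) (mmul a msigma) \<in> manin_relators (Phi n)"
    unfolding manin_relators_def using aS by blast
  then show ?thesis unfolding manin_rel_def e by (simp add: gk_def a_def zspan_base)
qed

lemma R2: assumes "fst k < 6" shows "gk n k + gk n (tauK k) + gk n (tauK (tauK k)) \<in> manin_rel (Phi n)"
proof -
  define a where "a = mk n k"
  have aS: "a \<in> SL2" unfolding a_def by (rule mk_SL2)
  have tS: "mtau \<in> SL2" by (simp add: mtau_def SL2_iff)
  have ka: "key n a = normK n k" unfolding a_def by (rule key_mk[OF assms])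
  have atS: "mmul a mtau \<in> SL2" by (simp add: aS tS SL2_mul del: mmul.simps)
  have "manin_gen (Phi n) (mmul a mtau) = gk n (key n (mmul a mtau))"
    by (rule manin_gen_key[OF atS])
  also have "\<dots> = gk n (tauK k)" unfolding key_tau[OF aS] ka normK_tauK gk_norm ..
  finally have e1: "manin_gen (Phi n) (mmul a mtau) = gk n (tauK k)" .
  have "manin_gen (Phi n) (mmul a (mmul mtau mtau)) = manin_gen (Phi n) (mmul (mmul a mtau) mtau)"
    by (simp only: mmul_assoc)
  also have "\<dots> = gk n (key n (mmul (mmul a mtau) mtau))"
    by (rule manin_gen_key) (simp add: atS tS SL2_mul del: mmul.simps)
  also have "\<dots> = gk n (tauK (tauK k))"
    unfolding key_tau[OF atS] key_tau[OF aS] ka normK_tauK normK_tauK2 gk_norm ..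
  finally have e2: "manin_gen (Phi n) (mmul a (mmul mtau mtau)) = gk n (tauK (tauK k))" .
  have "manin_gen (Phi n) a + manin_gen (Phi n) (mmul a mtau) + manin_gen (Phi n) (mmul a (mmul mtau mtau)) \<in> manin_relators (Phi n)"
    unfolding manin_relators_def using aS by blast
  then show ?thesis unfolding manin_rel_def e1 e2 by (simp add: gk_def a_def zspan_base)
qed


definition mb :: "nat \<Rightarrow> idx \<Rightarrow> mat2 set \<Rightarrow> int" where
  "mb n i = manin_gen (Phi n) (basis_mat n i)"

definition EE :: "nat \<Rightarrow> nat \<times> int \<times> int \<Rightarrow> mat2 set \<Rightarrow> int" where
  "EE n k = gk n k - (\<Sum>i\<in>basis_index n. smul (FF n k i) (mb n i))"

lemma EE_apply: "EE n k x = gk n k x - (\<Sum>i\<in>basis_index n. FF n k i * mb n i x)"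
  by (simp add: EE_def sum_fun_apply smul_def)

lemma FF_sig': "fst k < 6 \<Longrightarrow> FF n (sigK k) i = - FF n k i"
  using FF_sig[of k n i] by simp
lemma FF_tau': "n \<ge> 1 \<Longrightarrow> fst k < 6 \<Longrightarrow> FF n (tauK (tauK k)) i = - FF n k i - FF n (tauK k) i"
  using FF_tau[of n k i] by simp

lemma ER1: assumes "fst k < 6" shows "EE n k + EE n (sigK k) \<in> manin_rel (Phi n)"
proof -
  have "EE n k + EE n (sigK k) = gk n k + gk n (sigK k)"
    by (rule ext) (simp add: EE_apply FF_sig'[OF assms] sum_negf)
  then show ?thesis using R1[OF assms] by simp
qed

lemma ER2: assumes "n \<ge> 1" "fst k < 6" shows "EE n k + EE n (tauK k) + EE n (tauK (tauK k)) \<in> manin_rel (Phi n)"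
proof -
  have "EE n k + EE n (tauK k) + EE n (tauK (tauK k)) = gk n k + gk n (tauK k) + gk n (tauK (tauK k))"
    by (rule ext) (simp add: EE_apply FF_tau'[OF assms] sum_negf algebra_simps sum_subtractf)
  then show ?thesis using R2[OF assms(2)] by simp
qed

lemma EE_norm: "EE n (normK n k) = EE n k"
  by (simp add: EE_def gk_norm FF_norm)

lemma basis_mat_mk: assumes "n \<ge> 1" "t \<in> basis_index n" shows "basis_mat n t = mk n (bkey n t)"
proof -
  from assms(2) consider (a) i' j where "t = (0, i', j)" "1 \<le> i'" "i' \<le> n - 1" "j \<le> n - 1"
    | (b) j where "t = (1, 0, j)" "j \<le> n - 1" | (c) "t = (2, 0, 0)"
    unfolding basis_index_def by blast
  then show ?thesis
  proof cases
    case a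
    have "int i' mod int n = int i'" "int j mod int n = int j" using a assms(1) by auto
    then show ?thesis using a by (simp add: bkey_def mk_def Wm_def mpowA mpowB rep.simps del: mmul.simps)
  next
    case b
    have "(int n - 1) mod int n = int n - 1" using assms(1) by (intro mod_pos_pos_trivial) auto
    moreover have "int j mod int n = int j" using b assms(1) by auto
    moreover have "int (n - 1) = int n - 1" using assms(1) by simp
    ultimately show ?thesis using b by (simp add: bkey_def mk_def Wm_def mpowA mpowB rep.simps del: mmul.simps)
  next
    case c
    have "(int n - 1) mod int n = int n - 1" using assms(1) by (intro mod_pos_pos_trivial) auto
    moreover have "int (n - 1) = int n - 1" using assms(1) by simp
    ultimately show ?thesis using c by (simp add: bkey_def mk_def Wm_def mpowA mpowB rep.simps Apow0 del: mmul.simps)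
  qed
qed

lemma finite_basis_index: "finite (basis_index n)"
proof -
  have "basis_index n \<subseteq> {0..2} \<times> {0..n} \<times> {0..n}" unfolding basis_index_def by auto
  then show ?thesis by (rule finite_subset) auto
qed

lemma EE_basis: assumes "n \<ge> 1" "t \<in> basis_index n" shows "EE n (bkey n t) = 0"
proof (rule ext)
  fix x
  have "(\<Sum>i\<in>basis_index n. FF n (bkey n t) i * mb n i x) = (\<Sum>i\<in>basis_index n. (if i = t then mb n i x else 0))"
    using FF_basis[OF assms] by (intro sum.cong) (auto simp: ev_def)
  also have "\<dots> = mb n t x" using assms(2) finite_basis_index by simp
  finally show "EE n (bkey n t) x = 0 x"
    using basis_mat_mk[OF assms] by (simp add: EE_apply gk_def mb_def)
qed

lemma R_add: "a \<in> manin_rel G \<Longrightarrow> b \<in> manin_rel G \<Longrightarrow> a + b \<in> manin_rel G"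
  unfolding manin_rel_def by (rule zspan_addc)
lemma R_diff: "a \<in> manin_rel G \<Longrightarrow> b \<in> manin_rel G \<Longrightarrow> a - b \<in> manin_rel G"
  unfolding manin_rel_def by (rule zspan_diffc)
lemma R_neg: "a \<in> manin_rel G \<Longrightarrow> - a \<in> manin_rel G"
  unfolding manin_rel_def by (rule zspan_uminus)
lemma R_zero: "0 \<in> manin_rel G"
  unfolding manin_rel_def by (rule zspan.zspan_zero)

lemma EE_cong_norm: "normK n k = normK n k' \<Longrightarrow> EE n k = EE n k'"
  using EE_norm[of n k] EE_norm[of n k'] by simp

lemma Bbas: assumes "n \<ge> 1" "u mod int n \<ge> 1" shows "EE n (2, u, v) \<in> manin_rel (Phi n)"
proof -
  define t where "t = (0::nat, nat (u mod int n), nat (v mod int n))"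
  have t: "t \<in> basis_index n" unfolding t_def basis_index_def using assms
    by (auto simp: nat_le_iff nat_less_iff)
  have "normK n (bkey n t) = normK n (2, u, v)" using assms by (simp add: t_def bkey_def normK_def)
  then have "EE n (2, u, v) = EE n (bkey n t)" by (rule EE_cong_norm[symmetric])
  then show ?thesis using EE_basis[OF assms(1) t] R_zero by simp
qed

lemma Bbas0: assumes "n \<ge> 1" "v mod int n = int n - 1" "u mod int n = 0" shows "EE n (2, u, v) \<in> manin_rel (Phi n)"
proof -
  have t: "(2, 0, 0) \<in> basis_index n" unfolding basis_index_def by auto
  have m: "(int n - 1) mod int n = int n - 1" using assms(1) by (intro mod_pos_pos_trivial) auto
  have "normK n (bkey n (2, 0, 0)) = normK n (2, u, v)" using assms m by (simp add: bkey_def normK_def)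
  then have "EE n (2, u, v) = EE n (bkey n (2, 0, 0))" by (rule EE_cong_norm[symmetric])
  then show ?thesis using EE_basis[OF assms(1) t] R_zero by simp
qed

lemma Abas: assumes "n \<ge> 1" "u mod int n = int n - 1" shows "EE n (0, u, v) \<in> manin_rel (Phi n)"
proof -
  define t where "t = (1::nat, 0::nat, nat (v mod int n))"
  have t: "t \<in> basis_index n" unfolding t_def basis_index_def using assms
    by (auto simp: nat_le_iff nat_less_iff)
  have m: "(int n - 1) mod int n = int n - 1" using assms(1) by (intro mod_pos_pos_trivial) auto
  have "normK n (bkey n t) = normK n (0, u, v)" using assms m by (simp add: t_def bkey_def normK_def)
  then have "EE n (0, u, v) = EE n (bkey n t)" by (rule EE_cong_norm[symmetric])
  then show ?thesis using EE_basis[OF assms(1) t] R_zero by simp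
qed

lemma Trel: assumes "n \<ge> 1"
  shows "- EE n (0, u, v) + EE n (0, u - 1, v) + EE n (2, u - 1, v) - EE n (2, u, v - 1) \<in> manin_rel (Phi n)"
proof -
  have A1: "EE n (0, u, v) + EE n (1, u, v) \<in> manin_rel (Phi n)"
    using ER1[of "(0, u, v)" n] by (simp add: sigK_def sc_def)
  have A2: "EE n (1, u, v) + EE n (4, u - 1, v) + EE n (5, u, v - 1) \<in> manin_rel (Phi n)"
    using ER2[OF assms, of "(1, u, v)"] by (simp add: tauK_def)
  have A3: "EE n (3, u - 1, v) + EE n (4, u - 1, v) \<in> manin_rel (Phi n)"
    using ER1[of "(3, u - 1, v)" n] by (simp add: sigK_def sc_def)
  have A4: "EE n (0, u - 1, v) + EE n (2, u - 1, v) + EE n (3, u - 1, v) \<in> manin_rel (Phi n)"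
    using ER2[OF assms, of "(0, u - 1, v)"] by (simp add: tauK_def)
  have A5: "EE n (2, u, v - 1) + EE n (5, u, v - 1) \<in> manin_rel (Phi n)"
    using ER1[of "(2, u, v - 1)" n] by (simp add: sigK_def sc_def)
  have e: "- EE n (0, u, v) + EE n (0, u - 1, v) + EE n (2, u - 1, v) - EE n (2, u, v - 1) =
    (- (EE n (0, u, v) + EE n (1, u, v)) + (EE n (1, u, v) + EE n (4, u - 1, v) + EE n (5, u, v - 1)))
    - (EE n (3, u - 1, v) + EE n (4, u - 1, v)) + (EE n (0, u - 1, v) + EE n (2, u - 1, v) + EE n (3, u - 1, v))
    - (EE n (2, u, v - 1) + EE n (5, u, v - 1))"
    by (simp add: algebra_simps)
  show ?thesis unfolding e
    by (intro R_add R_diff R_neg A1 A2 A3 A4 A5)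
qed

lemma grp1: fixes a b c d :: "'a::ab_group_add" shows "a = (- b + a + c - d) + b - c + d"
  by (simp add: algebra_simps)

lemma alpha_pos_aux: assumes "n \<ge> 1"
  shows "\<forall>u v. u = int n - 1 - int d \<and> u \<ge> 1 \<longrightarrow> EE n (0, u, v) \<in> manin_rel (Phi n)"
proof (induction d)
  case 0
  show ?case
  proof (intro allI impI)
    fix u v assume a: "u = int n - 1 - int 0 \<and> u \<ge> 1"
    then have u: "u = int n - 1" by simp
    have "(int n - 1) mod int n = int n - 1" using a u by (intro mod_pos_pos_trivial) auto
    then show "EE n (0, u, v) \<in> manin_rel (Phi n)" unfolding u by (rule Abas[OF assms])
  qed
next
  case (Suc d)
  show ?case
  proof (intro allI impI)
    fix u v assume a: "u = int n - 1 - int (Suc d) \<and> u \<ge> 1"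
    have h: "u + 1 = int n - 1 - int d \<and> u + 1 \<ge> 1" using a by simp
    have IH: "EE n (0, u + 1, v) \<in> manin_rel (Phi n)" using Suc.IH h by blast
    have T: "- EE n (0, u + 1, v) + EE n (0, u, v) + EE n (2, u, v) - EE n (2, u + 1, v - 1) \<in> manin_rel (Phi n)"
      using Trel[OF assms, of "u + 1" v] by simp
    have B1: "EE n (2, u, v) \<in> manin_rel (Phi n)"
    proof (rule Bbas[OF assms])
      have "u mod int n = u" using a by (intro mod_pos_pos_trivial) auto
      then show "u mod int n \<ge> 1" using a by simp
    qed
    have B2: "EE n (2, u + 1, v - 1) \<in> manin_rel (Phi n)"
    proof (rule Bbas[OF assms])
      have "(u + 1) mod int n = u + 1" using a by (intro mod_pos_pos_trivial) auto
      then show "(u + 1) mod int n \<ge> 1" using a by simp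
    qed
    have e: "EE n (0, u, v) = (- EE n (0, u + 1, v) + EE n (0, u, v) + EE n (2, u, v) - EE n (2, u + 1, v - 1))
       + EE n (0, u + 1, v) - EE n (2, u, v) + EE n (2, u + 1, v - 1)"
      by (rule grp1)
    have X: "(- EE n (0, u + 1, v) + EE n (0, u, v) + EE n (2, u, v) - EE n (2, u + 1, v - 1))
       + EE n (0, u + 1, v) - EE n (2, u, v) + EE n (2, u + 1, v - 1) \<in> manin_rel (Phi n)"
      by (intro R_add R_diff T IH B1 B2)
    show "EE n (0, u, v) \<in> manin_rel (Phi n)" by (subst e) (rule X)
  qed
qed

lemma alpha_pos: assumes "n \<ge> 1" "1 \<le> u" "u \<le> int n - 1" shows "EE n (0, u, v) \<in> manin_rel (Phi n)"
proof -
  have "u = int n - 1 - int (nat (int n - 1 - u))" using assms by simp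
  then show ?thesis using alpha_pos_aux[OF assms(1), of "nat (int n - 1 - u)"] assms by blast
qed

lemma zero_row: assumes "n \<ge> 1"
  shows "EE n (0, 0, v) \<in> manin_rel (Phi n) \<and> EE n (2, 0, v) \<in> manin_rel (Phi n)"
proof (cases "n = 1")
  case True
  have a: "EE n (0, 0, v) \<in> manin_rel (Phi n)" by (rule Abas[OF assms]) (simp add: True)
  have b: "EE n (2, 0, v) \<in> manin_rel (Phi n)" by (rule Bbas0[OF assms]) (simp_all add: True)
  show ?thesis using a b by simp
next
  case False
  then have n2: "n \<ge> 2" using assms by simp
  have X: "EE n (0, 0, w) + EE n (2, 0, w) \<in> manin_rel (Phi n)" for w
  proof -
    have T: "- EE n (0, 1, w) + EE n (0, 0, w) + EE n (2, 0, w) - EE n (2, 1, w - 1) \<in> manin_rel (Phi n)"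
      using Trel[OF assms, of 1 w] by simp
    have a1: "EE n (0, 1, w) \<in> manin_rel (Phi n)" using alpha_pos[OF assms, of 1 w] n2 by simp
    have b1: "EE n (2, 1, w - 1) \<in> manin_rel (Phi n)" using Bbas[OF assms, of 1 "w - 1"] n2 by simp
    have e: "EE n (0, 0, w) + EE n (2, 0, w) = (- EE n (0, 1, w) + EE n (0, 0, w) + EE n (2, 0, w) - EE n (2, 1, w - 1))
       + EE n (0, 1, w) + EE n (2, 1, w - 1)" by (simp add: algebra_simps)
    show ?thesis by (subst e) (intro R_add T a1 b1)
  qed
  have m1: "(-1) mod int n = int n - 1" using n2 by (simp add: zmod_minus1)
  have Y: "EE n (0, 0, w) + EE n (2, 0, w - 1) \<in> manin_rel (Phi n)" for w
  proof -
    have T: "- EE n (0, 0, w) + EE n (0, -1, w) + EE n (2, -1, w) - EE n (2, 0, w - 1) \<in> manin_rel (Phi n)"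
      using Trel[OF assms, of 0 w] by simp
    have a1: "EE n (0, -1, w) \<in> manin_rel (Phi n)" using Abas[OF assms, of "-1" w] m1 by simp
    have b1: "EE n (2, -1, w) \<in> manin_rel (Phi n)" using Bbas[OF assms, of "-1" w] m1 n2 by simp
    have e: "EE n (0, 0, w) + EE n (2, 0, w - 1) = - ((- EE n (0, 0, w) + EE n (0, -1, w) + EE n (2, -1, w) - EE n (2, 0, w - 1))
       - EE n (0, -1, w) - EE n (2, -1, w))" by (simp add: algebra_simps)
    show ?thesis by (subst e) (intro R_neg R_diff T a1 b1)
  qed
  have Z: "EE n (2, 0, w) - EE n (2, 0, w - 1) \<in> manin_rel (Phi n)" for w
  proof -
    have e: "EE n (2, 0, w) - EE n (2, 0, w - 1) = (EE n (0, 0, w) + EE n (2, 0, w)) - (EE n (0, 0, w) + EE n (2, 0, w - 1))"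
      by (simp add: algebra_simps)
    show ?thesis by (subst e) (intro R_diff X Y)
  qed
  have B: "EE n (2, 0, int n - 1 - int t) \<in> manin_rel (Phi n)" for t
  proof (induction t)
    case 0
    have "(int n - 1) mod int n = int n - 1" using assms by (intro mod_pos_pos_trivial) auto
    then show ?case using Bbas0[OF assms, of "int n - 1" 0] by simp
  next
    case (Suc t)
    have e: "EE n (2, 0, int n - 1 - int (Suc t)) = EE n (2, 0, int n - 1 - int t) - (EE n (2, 0, int n - 1 - int t) - EE n (2, 0, int n - 1 - int t - 1))"
      by (simp add: algebra_simps)
    show ?case by (subst e) (intro R_diff Suc Z)
  qed
  have b: "EE n (2, 0, v) \<in> manin_rel (Phi n)"
  proof -
    define t where "t = nat (int n - 1 - v mod int n)"
    have vr: "0 \<le> v mod int n" "v mod int n < int n" using assms by auto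
    then have "int n - 1 - int t = v mod int n" by (simp add: t_def)
    then have "normK n (2, 0, int n - 1 - int t) = normK n (2, 0, v)" by (simp add: normK_def)
    then show ?thesis using B[of t] EE_cong_norm by metis
  qed
  have a: "EE n (0, 0, v) \<in> manin_rel (Phi n)"
  proof -
    have e: "EE n (0, 0, v) = (EE n (0, 0, v) + EE n (2, 0, v)) - EE n (2, 0, v)" by simp
    show ?thesis by (subst e) (intro R_diff X b)
  qed
  show ?thesis using a b by simp
qed

lemma alpha_all: assumes "n \<ge> 1" shows "EE n (0, u, v) \<in> manin_rel (Phi n)"
proof -
  have c: "EE n (0, u, v) = EE n (0, u mod int n, v)" by (rule EE_cong_norm) (simp add: normK_def)
  have r: "0 \<le> u mod int n" "u mod int n < int n" using assms by auto
  show ?thesis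
  proof (cases "u mod int n = 0")
    case True then show ?thesis using c zero_row[OF assms, of v] by simp
  next
    case False then show ?thesis using c alpha_pos[OF assms, of "u mod int n" v] r by simp
  qed
qed

lemma beta_all: assumes "n \<ge> 1" shows "EE n (2, u, v) \<in> manin_rel (Phi n)"
proof (cases "u mod int n \<ge> 1")
  case True then show ?thesis by (rule Bbas[OF assms])
next
  case False
  have "0 \<le> u mod int n" using assms by simp
  then have "u mod int n = 0" using False by linarith
  then have "EE n (2, u, v) = EE n (2, 0, v)" by (intro EE_cong_norm) (simp add: normK_def)
  then show ?thesis using zero_row[OF assms, of v] by simp
qed

lemma EE_all: assumes "n \<ge> 1" "fst k < 6" shows "EE n k \<in> manin_rel (Phi n)"
proof -
  obtain c u v where k: "k = (c, u, v)" by (cases k) auto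
  have A: "EE n (0, u, v) \<in> manin_rel (Phi n)" by (rule alpha_all[OF assms(1)])
  have B: "EE n (2, u, v) \<in> manin_rel (Phi n)" by (rule beta_all[OF assms(1)])
  have S0: "EE n (0, u, v) + EE n (1, u, v) \<in> manin_rel (Phi n)"
    using ER1[of "(0, u, v)" n] by (simp add: sigK_def sc_def)
  have S2: "EE n (2, u, v) + EE n (5, u, v) \<in> manin_rel (Phi n)"
    using ER1[of "(2, u, v)" n] by (simp add: sigK_def sc_def)
  have S3: "EE n (3, u, v) + EE n (4, u, v) \<in> manin_rel (Phi n)"
    using ER1[of "(3, u, v)" n] by (simp add: sigK_def sc_def)
  have T0: "EE n (0, u, v) + EE n (2, u, v) + EE n (3, u, v) \<in> manin_rel (Phi n)"
    using ER2[OF assms(1), of "(0, u, v)"] by (simp add: tauK_def)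
  have C1: "EE n (1, u, v) \<in> manin_rel (Phi n)"
  proof -
    have e: "EE n (1, u, v) = (EE n (0, u, v) + EE n (1, u, v)) - EE n (0, u, v)" by simp
    show ?thesis by (subst e) (intro R_diff S0 A)
  qed
  have C5: "EE n (5, u, v) \<in> manin_rel (Phi n)"
  proof -
    have e: "EE n (5, u, v) = (EE n (2, u, v) + EE n (5, u, v)) - EE n (2, u, v)" by simp
    show ?thesis by (subst e) (intro R_diff S2 B)
  qed
  have C3: "EE n (3, u, v) \<in> manin_rel (Phi n)"
  proof -
    have e: "EE n (3, u, v) = (EE n (0, u, v) + EE n (2, u, v) + EE n (3, u, v)) - EE n (0, u, v) - EE n (2, u, v)" by simp
    show ?thesis by (subst e) (intro R_diff T0 A B)
  qed
  have C4: "EE n (4, u, v) \<in> manin_rel (Phi n)"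
  proof -
    have e: "EE n (4, u, v) = (EE n (3, u, v) + EE n (4, u, v)) - EE n (3, u, v)" by simp
    show ?thesis by (subst e) (intro R_diff S3 C3)
  qed
  have "c = 0 \<or> c = 1 \<or> c = 2 \<or> c = 3 \<or> c = 4 \<or> c = 5" using assms(2) k by auto
  then show ?thesis using k A B C1 C3 C4 C5 by auto
qed


definition Keys :: "nat \<Rightarrow> (nat \<times> int \<times> int) set" where
  "Keys n = {0..<6} \<times> {0..<int n} \<times> {0..<int n}"

lemma finite_Keys: "finite (Keys n)" by (simp add: Keys_def)

lemma key_in_Keys: "n \<ge> 1 \<Longrightarrow> key n a \<in> Keys n"
  by (simp add: Keys_def key_def cls_lt6)

lemma normK_Keys: "k \<in> Keys n \<Longrightarrow> normK n k = k"
  by (auto simp: Keys_def normK_def)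

lemma Keys_fst: "k \<in> Keys n \<Longrightarrow> fst k < 6" by (auto simp: Keys_def)

definition Fi :: "nat \<Rightarrow> (mat2 set \<Rightarrow> int) \<Rightarrow> idx \<Rightarrow> int" where
  "Fi n v i = (\<Sum>k\<in>Keys n. v (rcoset (Phi n) (mk n k)) * FF n k i)"

lemma Fi_gen: assumes "n \<ge> 1" "a \<in> SL2" shows "Fi n (manin_gen (Phi n) a) i = FF n (key n a) i"
proof -
  have "manin_gen (Phi n) a (rcoset (Phi n) (mk n k)) = (if k = key n a then 1 else 0)" if k: "k \<in> Keys n" for k
  proof -
    have "rcoset (Phi n) (mk n k) = rcoset (Phi n) a \<longleftrightarrow> key n (mk n k) = key n a"
      by (rule rcoset_key[OF mk_SL2 assms(2)])
    also have "key n (mk n k) = k" using key_mk[OF Keys_fst[OF k]] normK_Keys[OF k] by simp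
    finally show ?thesis by (auto simp: manin_gen_def)
  qed
  then have "Fi n (manin_gen (Phi n) a) i = (\<Sum>k\<in>Keys n. (if k = key n a then FF n k i else 0))"
    unfolding Fi_def by (intro sum.cong) auto
  also have "\<dots> = FF n (key n a) i" using key_in_Keys[OF assms(1)] finite_Keys by simp
  finally show ?thesis .
qed

lemma Fi_add: "Fi n (v + w) i = Fi n v i + Fi n w i"
  by (simp add: Fi_def sum.distrib algebra_simps)
lemma Fi_diff: "Fi n (v - w) i = Fi n v i - Fi n w i"
  by (simp add: Fi_def sum_subtractf algebra_simps)
lemma Fi_zero: "Fi n 0 i = 0"
  by (simp add: Fi_def)

lemma FF_tau_norm: "FF n (tauK (normK n x)) i = FF n (tauK x) i"
  using FF_norm[of n "tauK (normK n x)" i] FF_norm[of n "tauK x" i] normK_tauK[of n x] by simp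

lemma Fi_relators: assumes "n \<ge> 1" "r \<in> manin_relators (Phi n)" shows "Fi n r i = 0"
proof -
  have sS: "msigma \<in> SL2" by (simp add: msigma_def SL2_iff)
  have tS: "mtau \<in> SL2" by (simp add: mtau_def SL2_iff)
  from assms(2) consider (s) a where "a \<in> SL2" "r = manin_gen (Phi n) a + manin_gen (Phi n) (mmul a msigma)"
    | (t) a where "a \<in> SL2" "r = manin_gen (Phi n) a + manin_gen (Phi n) (mmul a mtau) + manin_gen (Phi n) (mmul a (mmul mtau mtau))"
    unfolding manin_relators_def by blast
  then show ?thesis
  proof cases
    case s
    have aS: "mmul a msigma \<in> SL2" using s(1) sS by (rule SL2_mul)
    have "Fi n r i = FF n (key n a) i + FF n (normK n (sigK (key n a))) i"
      unfolding s(2) Fi_add Fi_gen[OF assms(1) s(1)] Fi_gen[OF assms(1) aS] key_sigma[OF s(1)] ..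
    also have "\<dots> = 0" unfolding FF_norm by (rule FF_sig) (simp add: key_def cls_lt6)
    finally show ?thesis .
  next
    case t
    have a1: "mmul a mtau \<in> SL2" using t(1) tS by (rule SL2_mul)
    have a2: "mmul (mmul a mtau) mtau \<in> SL2" using a1 tS by (rule SL2_mul)
    have e: "mmul a (mmul mtau mtau) = mmul (mmul a mtau) mtau" by (simp only: mmul_assoc)
    have "Fi n r i = FF n (key n a) i + FF n (normK n (tauK (key n a))) i + FF n (normK n (tauK (normK n (tauK (key n a))))) i"
      unfolding t(2) Fi_add e Fi_gen[OF assms(1) t(1)] Fi_gen[OF assms(1) a1] Fi_gen[OF assms(1) a2]
        key_tau[OF t(1)] key_tau[OF a1] ..
    also have "\<dots> = FF n (key n a) i + FF n (tauK (key n a)) i + FF n (tauK (tauK (key n a))) i"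
      unfolding FF_norm FF_tau_norm ..
    also have "\<dots> = 0" by (rule FF_tau[OF assms(1)]) (simp add: key_def cls_lt6)
    finally show ?thesis .
  qed
qed

lemma Fi_rel: assumes "n \<ge> 1" "r \<in> manin_rel (Phi n)" shows "Fi n r i = 0"
  using assms(2) unfolding manin_rel_def
proof induction
  case zspan_zero then show ?case by (rule Fi_zero)
next
  case (zspan_add w v)
  have "Fi n v i = 0" using Fi_relators[OF assms(1) zspan_add.hyps(2)] .
  then show ?case unfolding Fi_add using zspan_add.IH by simp
next
  case (zspan_diff w v)
  have "Fi n v i = 0" using Fi_relators[OF assms(1) zspan_diff.hyps(2)] .
  then show ?case unfolding Fi_diff using zspan_diff.IH by simp
qed

lemma rc_mk_iff: assumes "a \<in> SL2" "k \<in> Keys n"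
  shows "rcoset (Phi n) (mk n k) = rcoset (Phi n) a \<longleftrightarrow> k = key n a"
proof -
  have "rcoset (Phi n) (mk n k) = rcoset (Phi n) a \<longleftrightarrow> key n (mk n k) = key n a"
    by (rule rcoset_key[OF mk_SL2 assms(1)])
  also have "key n (mk n k) = k" using key_mk[OF Keys_fst[OF assms(2)]] normK_Keys[OF assms(2)] by simp
  finally show ?thesis .
qed

lemma v_expand: assumes "n \<ge> 1" "v \<in> free_cosets (Phi n)"
  shows "v x = (\<Sum>k\<in>Keys n. v (rcoset (Phi n) (mk n k)) * gk n k x)"
proof (cases "x \<in> right_cosets (Phi n)")
  case True
  then obtain a where a: "a \<in> SL2" "x = rcoset (Phi n) a" by (auto simp: right_cosets_def)
  have g: "gk n k x = (if k = key n a then 1 else 0)" if k: "k \<in> Keys n" for k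
  proof -
    have "(rcoset (Phi n) a = rcoset (Phi n) (mk n k)) = (k = key n a)"
      using rc_mk_iff[OF a(1) k] by (simp only: eq_commute)
    then show ?thesis unfolding gk_def manin_gen_def a(2) by (simp only:)
  qed
  have "(\<Sum>k\<in>Keys n. v (rcoset (Phi n) (mk n k)) * gk n k x) = (\<Sum>k\<in>Keys n. if k = key n a then v (rcoset (Phi n) (mk n k)) else 0)"
    by (rule sum.cong) (simp_all add: g)
  also have "\<dots> = v (rcoset (Phi n) (mk n (key n a)))" using key_in_Keys[OF assms(1)] finite_Keys by simp
  also have "rcoset (Phi n) (mk n (key n a)) = x" using rc_mk_iff[OF a(1) key_in_Keys[OF assms(1)]] a(2) by simp
  finally show ?thesis by simp
next
  case False
  then have "v x = 0" using assms(2) by (simp add: free_cosets_def)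
  moreover have "gk n k x = 0" for k
  proof -
    have "rcoset (Phi n) (mk n k) \<in> right_cosets (Phi n)" unfolding right_cosets_def using mk_SL2 by blast
    then show ?thesis using False by (auto simp: gk_def manin_gen_def)
  qed
  ultimately show ?thesis by simp
qed

lemma existence: assumes "n \<ge> 1" "v \<in> free_cosets (Phi n)"
  shows "v - (\<lambda>x. \<Sum>t\<in>basis_index n. Fi n v t * manin_gen (Phi n) (basis_mat n t) x) \<in> manin_rel (Phi n)"
proof -
  let ?vk = "\<lambda>k. v (rcoset (Phi n) (mk n k))"
  have e: "v - (\<lambda>x. \<Sum>t\<in>basis_index n. Fi n v t * manin_gen (Phi n) (basis_mat n t) x) = (\<Sum>k\<in>Keys n. smul (?vk k) (EE n k))"
  proof (rule ext)
    fix x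
    have "(\<Sum>k\<in>Keys n. smul (?vk k) (EE n k)) x = (\<Sum>k\<in>Keys n. ?vk k * gk n k x) - (\<Sum>k\<in>Keys n. \<Sum>t\<in>basis_index n. ?vk k * FF n k t * mb n t x)"
      by (simp add: sum_fun_apply smul_def EE_apply right_diff_distrib sum_subtractf sum_distrib_left mult.assoc)
    also have "(\<Sum>k\<in>Keys n. \<Sum>t\<in>basis_index n. ?vk k * FF n k t * mb n t x) = (\<Sum>t\<in>basis_index n. Fi n v t * manin_gen (Phi n) (basis_mat n t) x)"
      by (subst sum.swap) (simp add: Fi_def sum_distrib_right mb_def)
    finally show "(v - (\<lambda>x. \<Sum>t\<in>basis_index n. Fi n v t * manin_gen (Phi n) (basis_mat n t) x)) x = (\<Sum>k\<in>Keys n. smul (?vk k) (EE n k)) x"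
      using v_expand[OF assms, of x] by simp
  qed
  show ?thesis unfolding e manin_rel_def
    by (intro zspan_sum zspan_smult) (use EE_all[OF assms(1) Keys_fst] in \<open>simp add: manin_rel_def\<close>)
qed

lemma bkey_fst: "t \<in> basis_index n \<Longrightarrow> fst (bkey n t) < 6"
  by (auto simp: basis_index_def bkey_def)

lemma basis_SL2: "basis_mat n t \<in> SL2"
proof -
  have "mtau \<in> SL2" by (simp add: mtau_def SL2_iff)
  moreover have "mpow matA k \<in> SL2" "mpow matB k \<in> SL2" for k
    by (simp_all add: mpowA mpowB Gamma2_SL2)
  ultimately show ?thesis by (cases t) (simp add: SL2_mul del: mmul.simps)
qed

lemma FF_key_basis: assumes "n \<ge> 1" "t \<in> basis_index n" shows "FF n (key n (basis_mat n t)) i = ev t i"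
  using basis_mat_mk[OF assms] key_mk[OF bkey_fst[OF assms(2)], of n] FF_norm FF_basis[OF assms] by simp

lemma Fi_S: assumes "n \<ge> 1" "t \<in> basis_index n"
  shows "Fi n (\<lambda>x. \<Sum>s\<in>basis_index n. c s * manin_gen (Phi n) (basis_mat n s) x) t = c t"
proof -
  have "Fi n (\<lambda>x. \<Sum>s\<in>basis_index n. c s * manin_gen (Phi n) (basis_mat n s) x) t
     = (\<Sum>s\<in>basis_index n. c s * Fi n (manin_gen (Phi n) (basis_mat n s)) t)"
    unfolding Fi_def sum_distrib_right sum_distrib_left mult.assoc by (rule sum.swap)
  also have "\<dots> = (\<Sum>s\<in>basis_index n. if s = t then c s else 0)"
    using FF_key_basis[OF assms(1)] Fi_gen[OF assms(1) basis_SL2] by (intro sum.cong) (auto simp: ev_def)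
  also have "\<dots> = c t" using assms(2) finite_basis_index by simp
  finally show ?thesis .
qed

lemma uniqueness: assumes "n \<ge> 1" "t \<in> basis_index n"
  "v - (\<lambda>x. \<Sum>s\<in>basis_index n. c s * manin_gen (Phi n) (basis_mat n s) x) \<in> manin_rel (Phi n)"
  shows "c t = Fi n v t"
  using Fi_rel[OF assms(1) assms(3), of t] Fi_S[OF assms(1,2), of c] by (simp add: Fi_diff)

lemma card_basis: assumes "n \<ge> 1" shows "card (basis_index n) = n^2 + 1"
proof -
  define X where "X = (\<lambda>(i, j). (0::nat, i, j)) ` ({1..n - 1} \<times> {0..n - 1})"
  define Y where "Y = (\<lambda>j. (1::nat, 0::nat, j)) ` {0..n - 1}"
  have e: "basis_index n = X \<union> Y \<union> {(2, 0, 0)}" unfolding basis_index_def X_def Y_def by auto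
  have cX: "card X = (n - 1) * n" unfolding X_def using assms
    by (subst card_image) (auto simp: inj_on_def)
  have cY: "card Y = n" unfolding Y_def using assms
    by (subst card_image) (auto simp: inj_on_def)
  have "card (basis_index n) = card X + card Y + 1" unfolding e
    by (subst card_Un_disjoint, simp add: X_def Y_def, simp add: X_def Y_def, force simp: X_def Y_def)+
      (simp_all add: X_def Y_def)
  also have "\<dots> = n^2 + 1" using cX cY assms by (simp add: power2_eq_square algebra_simps)
  finally show ?thesis .
qed

theorem proposition4p1:
  fixes n :: nat
  assumes "n \<ge> 1"
  shows "card (basis_index n) = n^2 + 1 \<and> is_manin_basis (Phi n) (basis_index n) (basis_mat n)"
proof -
  have M: "\<exists>!c. (\<forall>k. k \<notin> basis_index n \<longrightarrow> c k = 0) \<and>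
        v - (\<lambda>x. \<Sum>k\<in>basis_index n. c k * manin_gen (Phi n) (basis_mat n k) x) \<in> manin_rel (Phi n)"
    if v: "v \<in> free_cosets (Phi n)" for v
  proof (rule ex1I[of _ "\<lambda>t. if t \<in> basis_index n then Fi n v t else 0"], rule conjI)
    show "\<forall>k. k \<notin> basis_index n \<longrightarrow> (if k \<in> basis_index n then Fi n v k else 0) = 0" by simp
    have "(\<lambda>x. \<Sum>k\<in>basis_index n. (if k \<in> basis_index n then Fi n v k else 0) * manin_gen (Phi n) (basis_mat n k) x)
        = (\<lambda>x. \<Sum>t\<in>basis_index n. Fi n v t * manin_gen (Phi n) (basis_mat n t) x)"
      by (rule ext, rule sum.cong) simp_all
    then show "v - (\<lambda>x. \<Sum>k\<in>basis_index n. (if k \<in> basis_index n then Fi n v k else 0) * manin_gen (Phi n) (basis_mat n k) x) \<in> manin_rel (Phi n)"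
      using existence[OF assms v] by simp
  next
    fix c assume c: "(\<forall>k. k \<notin> basis_index n \<longrightarrow> c k = 0) \<and>
        v - (\<lambda>x. \<Sum>k\<in>basis_index n. c k * manin_gen (Phi n) (basis_mat n k) x) \<in> manin_rel (Phi n)"
    show "c = (\<lambda>t. if t \<in> basis_index n then Fi n v t else 0)"
    proof (rule ext)
      fix t show "c t = (if t \<in> basis_index n then Fi n v t else 0)"
      proof (cases "t \<in> basis_index n")
        case True then show ?thesis using uniqueness[OF assms True conjunct2[OF c]] by simp
      next
        case False
        have "\<forall>k. k \<notin> basis_index n \<longrightarrow> c k = 0" using c by (rule conjunct1)
        then have "c t = 0" using False by blast
        then show ?thesis using False by simp
      qed
    qed
  qed
  show ?thesis using card_basis[OF assms] finite_basis_index basis_SL2 M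
    unfolding is_manin_basis_def by blast
qed


end
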